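(* Let $n\ge 3$, let $K$ be a field and $S_n$ as defined below. If $Q$ is a prime ideal of the monoid $S_n$, then $Q\supseteq a_1a_2\cdots a_nS_n$ and $K[Q]$ is a prime ideal of $K[S_n]$; moreover $K[S_n]/K[Q]$ is isomorphic to a prime monomial algebra.
   Context: For $n\ge 3$, $S_n$ denotes the monoid with generators $a_1,\dots,a_n$ and defining relations $a_1a_2\cdots a_n=a_{\sigma(1)}a_{\sigma(2)}\cdots a_{\sigma(n)}$ for all $\sigma$ in the cyclic subgroup of $\operatorname{Sym}_n$ generated by the cycle $(1,2,\dots,n)$. An ideal $Q\neq S$ of a monoid $S$ is prime if $aSb\subseteq Q$ with $a,b\in S$ implies $a\in Q$ or $b\in Q$. For an ideal $I$ of $S_n$, $K[I]$ denotes the $K$-linear span of $I$ in $K[S_n]$. A monomial algebra is a quotient of a free algebra $K\langle x_1,\dots,x_m\rangle$ by an ideal spanned by words. *)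

theory Defs
  imports "HOL-Algebra.Algebra"
begin

text \<open>Generator a_(i+1) is encoded as the letter i, so words over a_1..a_n are
  lists over {..<n}; the word a_1 a_2 ... a_n is [0..<n]. The permutation
  (1 2 ... n)^k sends a_1...a_n to the rotated word rotate k [0..<n].\<close>

definition words :: "nat \<Rightarrow> nat list set" where
  "words n = {w. set w \<subseteq> {..<n}}"

definition Sn_rel0 :: "nat \<Rightarrow> (nat list \<times> nat list) set" where
  "Sn_rel0 n = {(u @ [0..<n] @ v, u @ rotate k [0..<n] @ v) | u v k.
                  u \<in> words n \<and> v \<in> words n \<and> k < n}"

definition Sn_cong :: "nat \<Rightarrow> (nat list \<times> nat list) set" where
  "Sn_cong n = (Sn_rel0 n \<union> (Sn_rel0 n)\<inverse>)\<^sup>*"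

definition Sn :: "nat \<Rightarrow> nat list set monoid" where
  "Sn n = \<lparr> carrier = words n // Sn_cong n,
            monoid.mult = (\<lambda>C D. Sn_cong n `` {(SOME w. w \<in> C) @ (SOME w. w \<in> D)}),
            one = Sn_cong n `` {[]} \<rparr>"

definition Sn_top :: "nat \<Rightarrow> nat list set" where
  "Sn_top n = Sn_cong n `` {[0..<n]}"

text \<open>The free monoid on m generators x_1..x_m (letter i encodes x_(i+1)).\<close>
definition free_mon :: "nat \<Rightarrow> nat list monoid" where
  "free_mon m = \<lparr> carrier = words m, monoid.mult = (@), one = [] \<rparr>"

text \<open>Semigroup ideals are nonempty by convention.\<close>
definition mon_ideal :: "('m, 'b) monoid_scheme \<Rightarrow> 'm set \<Rightarrow> bool" where
  "mon_ideal S Q \<longleftrightarrow> Q \<noteq> {} \<and> Q \<subseteq> carrier S \<and>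
     (\<forall>q\<in>Q. \<forall>s\<in>carrier S. q \<otimes>\<^bsub>S\<^esub> s \<in> Q \<and> s \<otimes>\<^bsub>S\<^esub> q \<in> Q)"

definition mon_prime :: "('m, 'b) monoid_scheme \<Rightarrow> 'm set \<Rightarrow> bool" where
  "mon_prime S Q \<longleftrightarrow> mon_ideal S Q \<and> Q \<noteq> carrier S \<and>
     (\<forall>a\<in>carrier S. \<forall>b\<in>carrier S.
        (\<forall>s\<in>carrier S. a \<otimes>\<^bsub>S\<^esub> s \<otimes>\<^bsub>S\<^esub> b \<in> Q) \<longrightarrow> a \<in> Q \<or> b \<in> Q)"

definition mon_alg :: "('m, 'b) monoid_scheme \<Rightarrow> ('m \<Rightarrow> 'k::field) ring" where
  "mon_alg M = \<lparr> carrier = {f. (\<forall>x. x \<notin> carrier M \<longrightarrow> f x = 0) \<and> finite {x. f x \<noteq> 0}},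
     monoid.mult = (\<lambda>f g z. \<Sum>(x, y) \<in> {(x, y). x \<in> carrier M \<and> y \<in> carrier M \<and>
                                   f x \<noteq> 0 \<and> g y \<noteq> 0 \<and> x \<otimes>\<^bsub>M\<^esub> y = z}. f x * g y),
     one = (\<lambda>z. if z = \<one>\<^bsub>M\<^esub> then 1 else 0),
     ring.zero = (\<lambda>_. 0),
     ring.add = (\<lambda>f g z. f z + g z) \<rparr>"

definition span_in :: "('m, 'b) monoid_scheme \<Rightarrow> 'm set \<Rightarrow> ('m \<Rightarrow> 'k::field) set" where
  "span_in M I = {f \<in> carrier (mon_alg M). \<forall>x. f x \<noteq> 0 \<longrightarrow> x \<in> I}"

definition smult_fun :: "'k::field \<Rightarrow> ('m \<Rightarrow> 'k) \<Rightarrow> ('m \<Rightarrow> 'k)" where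
  "smult_fun k f = (\<lambda>z. k * f z)"

definition nc_prime_ideal :: "'a set \<Rightarrow> ('a, 'b) ring_scheme \<Rightarrow> bool" where
  "nc_prime_ideal I R \<longleftrightarrow> ideal I R \<and> I \<noteq> carrier R \<and>
     (\<forall>a\<in>carrier R. \<forall>b\<in>carrier R.
        (\<forall>r\<in>carrier R. a \<otimes>\<^bsub>R\<^esub> r \<otimes>\<^bsub>R\<^esub> b \<in> I) \<longrightarrow> a \<in> I \<or> b \<in> I)"

definition prime_ring :: "('a, 'b) ring_scheme \<Rightarrow> bool" where
  "prime_ring R \<longleftrightarrow> ring R \<and> carrier R \<noteq> {\<zero>\<^bsub>R\<^esub>} \<and>
     (\<forall>a\<in>carrier R. \<forall>b\<in>carrier R.
        (\<forall>r\<in>carrier R. a \<otimes>\<^bsub>R\<^esub> r \<otimes>\<^bsub>R\<^esub> b = \<zero>\<^bsub>R\<^esub>) \<longrightarrow> a = \<zero>\<^bsub>R\<^esub> \<or> b = \<zero>\<^bsub>R\<^esub>)"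

text \<open>W is a set of words closed under multiplication by words on both sides
  (so its span is an ideal of the free algebra).\<close>
definition word_ideal :: "nat \<Rightarrow> nat list set \<Rightarrow> bool" where
  "word_ideal m W \<longleftrightarrow> W \<subseteq> words m \<and>
     (\<forall>w\<in>W. \<forall>u\<in>words m. \<forall>v\<in>words m. u @ w @ v \<in> W)"

text \<open>An isomorphism of K-algebras A/I -> B/J: a ring isomorphism of the quotient
  rings that is K-linear.\<close>
definition quot_alg_iso ::
  "('m \<Rightarrow> 'k::field) ring \<Rightarrow> ('m \<Rightarrow> 'k) set \<Rightarrow> ('n \<Rightarrow> 'k) ring \<Rightarrow> ('n \<Rightarrow> 'k) set
     \<Rightarrow> (('m \<Rightarrow> 'k) set \<Rightarrow> ('n \<Rightarrow> 'k) set) \<Rightarrow> bool" where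
  "quot_alg_iso A I B J \<phi> \<longleftrightarrow> \<phi> \<in> ring_iso (A Quot I) (B Quot J) \<and>
     (\<forall>k x y. x \<in> carrier A \<longrightarrow> y \<in> carrier B \<longrightarrow> \<phi> (I +>\<^bsub>A\<^esub> x) = J +>\<^bsub>B\<^esub> y \<longrightarrow>
        \<phi> (I +>\<^bsub>A\<^esub> smult_fun k x) = J +>\<^bsub>B\<^esub> smult_fun k y)"

end

theory Submission
  imports Defs
begin

lemma ma_carrier: "f \<in> carrier (mon_alg M) \<longleftrightarrow> (\<forall>x. x \<notin> carrier M \<longrightarrow> f x = 0) \<and> finite {x. f x \<noteq> 0}"
  by (simp add: mon_alg_def)

lemma ma_add: "f \<oplus>\<^bsub>mon_alg M\<^esub> g = (\<lambda>z. f z + g z)"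
  by (simp add: mon_alg_def)

lemma ma_zero: "\<zero>\<^bsub>mon_alg M\<^esub> = (\<lambda>_. 0)"
  by (simp add: mon_alg_def)

lemma ma_one: "\<one>\<^bsub>mon_alg M\<^esub> = (\<lambda>z. if z = \<one>\<^bsub>M\<^esub> then 1 else 0)"
  by (simp add: mon_alg_def)

lemma ma_mult_eq:
  fixes f g :: "'m \<Rightarrow> 'k::field"
  assumes f: "f \<in> carrier (mon_alg M)" and g: "g \<in> carrier (mon_alg M)"
    and A: "finite A" "{x. f x \<noteq> 0} \<subseteq> A" and B: "finite B" "{y. g y \<noteq> 0} \<subseteq> B"
  shows "(f \<otimes>\<^bsub>mon_alg M\<^esub> g) z = (\<Sum>x\<in>A. \<Sum>y\<in>B. if x \<otimes>\<^bsub>M\<^esub> y = z then f x * g y else 0)"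
proof -
  have fc: "\<And>x. f x \<noteq> 0 \<Longrightarrow> x \<in> carrier M" using f by (auto simp: ma_carrier)
  have gc: "\<And>x. g x \<noteq> 0 \<Longrightarrow> x \<in> carrier M" using g by (auto simp: ma_carrier)
  let ?P = "{(x, y). x \<in> carrier M \<and> y \<in> carrier M \<and> f x \<noteq> 0 \<and> g y \<noteq> 0 \<and> x \<otimes>\<^bsub>M\<^esub> y = z}"
  have "(f \<otimes>\<^bsub>mon_alg M\<^esub> g) z = (\<Sum>(x,y)\<in>?P. f x * g y)"
    by (simp add: mon_alg_def)
  also have "\<dots> = (\<Sum>(x,y)\<in>A \<times> B. if x \<otimes>\<^bsub>M\<^esub> y = z then f x * g y else 0)"
  proof (rule sum.mono_neutral_cong_left)
    show "finite (A \<times> B)" using A B by simp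
    show "?P \<subseteq> A \<times> B" using A B by auto
    show "\<forall>i\<in>A \<times> B - ?P. (case i of (x, y) \<Rightarrow> if x \<otimes>\<^bsub>M\<^esub> y = z then f x * g y else 0) = 0"
      using fc gc by (auto split: if_splits)
    show "\<And>x. x \<in> ?P \<Longrightarrow> (case x of (x, y) \<Rightarrow> f x * g y) = (case x of (x, y) \<Rightarrow> if x \<otimes>\<^bsub>M\<^esub> y = z then f x * g y else 0)"
      by auto
  qed
  also have "\<dots> = (\<Sum>x\<in>A. \<Sum>y\<in>B. if x \<otimes>\<^bsub>M\<^esub> y = z then f x * g y else 0)"
    by (rule sum.cartesian_product[symmetric])
  finally show ?thesis .
qed

lemma ma_supp_carrier: "f \<in> carrier (mon_alg M) \<Longrightarrow> f x \<noteq> 0 \<Longrightarrow> x \<in> carrier M"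
  by (auto simp: ma_carrier)

lemma ma_mult_supp:
  fixes f g :: "'m \<Rightarrow> 'k::field"
  assumes f: "f \<in> carrier (mon_alg M)" and g: "g \<in> carrier (mon_alg M)"
    and nz: "(f \<otimes>\<^bsub>mon_alg M\<^esub> g) z \<noteq> 0"
  shows "\<exists>x y. f x \<noteq> 0 \<and> g y \<noteq> 0 \<and> x \<otimes>\<^bsub>M\<^esub> y = z"
proof (rule ccontr)
  assume "\<not> ?thesis"
  then have *: "\<And>x y. f x \<noteq> 0 \<Longrightarrow> g y \<noteq> 0 \<Longrightarrow> x \<otimes>\<^bsub>M\<^esub> y \<noteq> z" by blast
  have "(\<Sum>x\<in>{x. f x \<noteq> 0}. \<Sum>y\<in>{y. g y \<noteq> 0}. if x \<otimes>\<^bsub>M\<^esub> y = z then f x * g y else 0) = 0"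
    by (intro sum.neutral ballI) (use * in auto)
  with nz show False
    using ma_mult_eq[OF f g, of "{x. f x \<noteq> 0}" "{y. g y \<noteq> 0}" z] f g by (auto simp: ma_carrier)
qed

lemma ma_mult_closed:
  fixes f g :: "'m \<Rightarrow> 'k::field"
  assumes M: "monoid M" and f: "f \<in> carrier (mon_alg M)" and g: "g \<in> carrier (mon_alg M)"
  shows "f \<otimes>\<^bsub>mon_alg M\<^esub> g \<in> carrier (mon_alg M)"
proof -
  have sub: "{z. (f \<otimes>\<^bsub>mon_alg M\<^esub> g) z \<noteq> 0} \<subseteq> (\<lambda>(x,y). x \<otimes>\<^bsub>M\<^esub> y) ` ({x. f x \<noteq> 0} \<times> {y. g y \<noteq> 0})"
    using ma_mult_supp[OF f g] by fastforce
  have fin: "finite {z. (f \<otimes>\<^bsub>mon_alg M\<^esub> g) z \<noteq> 0}"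
    by (rule finite_subset[OF sub]) (use f g in \<open>auto simp: ma_carrier\<close>)
  have "(f \<otimes>\<^bsub>mon_alg M\<^esub> g) z = 0" if "z \<notin> carrier M" for z
  proof (rule ccontr)
    assume "(f \<otimes>\<^bsub>mon_alg M\<^esub> g) z \<noteq> 0"
    then obtain x y where "f x \<noteq> 0" "g y \<noteq> 0" "x \<otimes>\<^bsub>M\<^esub> y = z" using ma_mult_supp[OF f g] by blast
    then show False using that f g M by (metis ma_supp_carrier monoid.m_closed)
  qed
  with fin show ?thesis by (simp add: ma_carrier)
qed

lemma sum_delta_cond:
  assumes "finite T" "x \<in> T"
  shows "(\<Sum>p\<in>T. if x = p \<and> Q p then Y else 0) = (if Q x then Y else (0::'a::comm_monoid_add))"
proof -
  have "(\<Sum>p\<in>T. if x = p \<and> Q p then Y else 0) = (\<Sum>p\<in>T. if x = p then (if Q x then Y else 0) else 0)"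
    by (rule sum.cong) auto
  then show ?thesis using assms by (simp add: sum.delta)
qed

lemma sum4_swap:
  "(\<Sum>p\<in>P. \<Sum>c\<in>C. \<Sum>a\<in>A. \<Sum>b\<in>B. F a b c p) = (\<Sum>a\<in>A. \<Sum>b\<in>B. \<Sum>c\<in>C. \<Sum>p\<in>P. F a b c p)"
proof -
  have "(\<Sum>p\<in>P. \<Sum>c\<in>C. \<Sum>a\<in>A. \<Sum>b\<in>B. F a b c p) = (\<Sum>p\<in>P. \<Sum>a\<in>A. \<Sum>c\<in>C. \<Sum>b\<in>B. F a b c p)"
    by (rule sum.cong[OF refl], rule sum.swap)
  also have "\<dots> = (\<Sum>p\<in>P. \<Sum>a\<in>A. \<Sum>b\<in>B. \<Sum>c\<in>C. F a b c p)"
    by (rule sum.cong[OF refl], rule sum.cong[OF refl], rule sum.swap)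
  also have "\<dots> = (\<Sum>a\<in>A. \<Sum>p\<in>P. \<Sum>b\<in>B. \<Sum>c\<in>C. F a b c p)"
    by (rule sum.swap)
  also have "\<dots> = (\<Sum>a\<in>A. \<Sum>b\<in>B. \<Sum>p\<in>P. \<Sum>c\<in>C. F a b c p)"
    by (rule sum.cong[OF refl], rule sum.swap)
  also have "\<dots> = (\<Sum>a\<in>A. \<Sum>b\<in>B. \<Sum>c\<in>C. \<Sum>p\<in>P. F a b c p)"
    by (rule sum.cong[OF refl], rule sum.cong[OF refl], rule sum.swap)
  finally show ?thesis .
qed

lemma sum3_swap:
  "(\<Sum>a\<in>A. \<Sum>q\<in>Q. \<Sum>b\<in>B. \<Sum>c\<in>C. F a b c q) = (\<Sum>a\<in>A. \<Sum>b\<in>B. \<Sum>c\<in>C. \<Sum>q\<in>Q. F a b c q)"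
proof -
  have "(\<Sum>a\<in>A. \<Sum>q\<in>Q. \<Sum>b\<in>B. \<Sum>c\<in>C. F a b c q) = (\<Sum>a\<in>A. \<Sum>b\<in>B. \<Sum>q\<in>Q. \<Sum>c\<in>C. F a b c q)"
    by (rule sum.cong[OF refl], rule sum.swap)
  also have "\<dots> = (\<Sum>a\<in>A. \<Sum>b\<in>B. \<Sum>c\<in>C. \<Sum>q\<in>Q. F a b c q)"
    by (rule sum.cong[OF refl], rule sum.cong[OF refl], rule sum.swap)
  finally show ?thesis .
qed

lemma ma_triple:
  fixes f g h :: "'m \<Rightarrow> 'k::field"
  assumes M: "monoid M" and f: "f \<in> carrier (mon_alg M)" and g: "g \<in> carrier (mon_alg M)"
    and h: "h \<in> carrier (mon_alg M)"
  shows "((f \<otimes>\<^bsub>mon_alg M\<^esub> g) \<otimes>\<^bsub>mon_alg M\<^esub> h) z =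
    (\<Sum>a\<in>{x. f x \<noteq> 0}. \<Sum>b\<in>{x. g x \<noteq> 0}. \<Sum>c\<in>{x. h x \<noteq> 0}.
       if (a \<otimes>\<^bsub>M\<^esub> b) \<otimes>\<^bsub>M\<^esub> c = z then f a * g b * h c else 0)"
   and "(f \<otimes>\<^bsub>mon_alg M\<^esub> (g \<otimes>\<^bsub>mon_alg M\<^esub> h)) z =
    (\<Sum>a\<in>{x. f x \<noteq> 0}. \<Sum>b\<in>{x. g x \<noteq> 0}. \<Sum>c\<in>{x. h x \<noteq> 0}.
       if a \<otimes>\<^bsub>M\<^esub> (b \<otimes>\<^bsub>M\<^esub> c) = z then f a * g b * h c else 0)"
proof -
  let ?A = "{x. f x \<noteq> 0}" and ?B = "{x. g x \<noteq> 0}" and ?C = "{x. h x \<noteq> 0}"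
  have fA: "finite ?A" "finite ?B" "finite ?C" using f g h by (auto simp: ma_carrier)
  let ?T = "(\<lambda>(x,y). x \<otimes>\<^bsub>M\<^esub> y) ` (?A \<times> ?B)"
  have fT: "finite ?T" using fA by simp
  have fg: "f \<otimes>\<^bsub>mon_alg M\<^esub> g \<in> carrier (mon_alg M)" by (rule ma_mult_closed[OF M f g])
  have sT: "{z. (f \<otimes>\<^bsub>mon_alg M\<^esub> g) z \<noteq> 0} \<subseteq> ?T"
    using ma_mult_supp[OF f g] by fastforce
  have "((f \<otimes>\<^bsub>mon_alg M\<^esub> g) \<otimes>\<^bsub>mon_alg M\<^esub> h) z =
     (\<Sum>p\<in>?T. \<Sum>c\<in>?C. if p \<otimes>\<^bsub>M\<^esub> c = z then (f \<otimes>\<^bsub>mon_alg M\<^esub> g) p * h c else 0)"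
    by (rule ma_mult_eq[OF fg h fT sT fA(3)]) simp
  also have "\<dots> = (\<Sum>p\<in>?T. \<Sum>c\<in>?C. \<Sum>a\<in>?A. \<Sum>b\<in>?B.
      if a \<otimes>\<^bsub>M\<^esub> b = p \<and> p \<otimes>\<^bsub>M\<^esub> c = z then f a * g b * h c else 0)"
    apply (intro sum.cong refl)
    subgoal for p c by (cases "p \<otimes>\<^bsub>M\<^esub> c = z") (auto simp: ma_mult_eq[OF f g fA(1) subset_refl fA(2) subset_refl] sum_distrib_right intro!: sum.cong)
    done
  also have "\<dots> = (\<Sum>a\<in>?A. \<Sum>b\<in>?B. \<Sum>c\<in>?C. \<Sum>p\<in>?T.
      if a \<otimes>\<^bsub>M\<^esub> b = p \<and> p \<otimes>\<^bsub>M\<^esub> c = z then f a * g b * h c else 0)"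
    by (rule sum4_swap)
  also have "\<dots> = (\<Sum>a\<in>?A. \<Sum>b\<in>?B. \<Sum>c\<in>?C.
       if (a \<otimes>\<^bsub>M\<^esub> b) \<otimes>\<^bsub>M\<^esub> c = z then f a * g b * h c else 0)"
  proof (intro sum.cong refl)
    fix a b c assume "a \<in> ?A" "b \<in> ?B" "c \<in> ?C"
    then have "a \<otimes>\<^bsub>M\<^esub> b \<in> ?T" by auto
    then show "(\<Sum>p\<in>?T. if a \<otimes>\<^bsub>M\<^esub> b = p \<and> p \<otimes>\<^bsub>M\<^esub> c = z then f a * g b * h c else 0) =
       (if (a \<otimes>\<^bsub>M\<^esub> b) \<otimes>\<^bsub>M\<^esub> c = z then f a * g b * h c else 0)"
      using sum_delta_cond[OF fT \<open>a \<otimes>\<^bsub>M\<^esub> b \<in> ?T\<close>, of "\<lambda>p. p \<otimes>\<^bsub>M\<^esub> c = z" "f a * g b * h c"] by simp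
  qed
  finally show "((f \<otimes>\<^bsub>mon_alg M\<^esub> g) \<otimes>\<^bsub>mon_alg M\<^esub> h) z =
    (\<Sum>a\<in>{x. f x \<noteq> 0}. \<Sum>b\<in>{x. g x \<noteq> 0}. \<Sum>c\<in>{x. h x \<noteq> 0}.
       if (a \<otimes>\<^bsub>M\<^esub> b) \<otimes>\<^bsub>M\<^esub> c = z then f a * g b * h c else 0)" .
next
  let ?A = "{x. f x \<noteq> 0}" and ?B = "{x. g x \<noteq> 0}" and ?C = "{x. h x \<noteq> 0}"
  have fA: "finite ?A" "finite ?B" "finite ?C" using f g h by (auto simp: ma_carrier)
  let ?T = "(\<lambda>(x,y). x \<otimes>\<^bsub>M\<^esub> y) ` (?B \<times> ?C)"
  have fT: "finite ?T" using fA by simp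
  have gh: "g \<otimes>\<^bsub>mon_alg M\<^esub> h \<in> carrier (mon_alg M)" by (rule ma_mult_closed[OF M g h])
  have sT: "{z. (g \<otimes>\<^bsub>mon_alg M\<^esub> h) z \<noteq> 0} \<subseteq> ?T"
    using ma_mult_supp[OF g h] by fastforce
  have "(f \<otimes>\<^bsub>mon_alg M\<^esub> (g \<otimes>\<^bsub>mon_alg M\<^esub> h)) z =
     (\<Sum>a\<in>?A. \<Sum>q\<in>?T. if a \<otimes>\<^bsub>M\<^esub> q = z then f a * (g \<otimes>\<^bsub>mon_alg M\<^esub> h) q else 0)"
    by (rule ma_mult_eq[OF f gh fA(1) _ fT sT]) simp
  also have "\<dots> = (\<Sum>a\<in>?A. \<Sum>q\<in>?T. \<Sum>b\<in>?B. \<Sum>c\<in>?C.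
      if b \<otimes>\<^bsub>M\<^esub> c = q \<and> a \<otimes>\<^bsub>M\<^esub> q = z then f a * g b * h c else 0)"
    apply (intro sum.cong refl)
    subgoal for a q by (cases "a \<otimes>\<^bsub>M\<^esub> q = z") (auto simp: ma_mult_eq[OF g h fA(2) subset_refl fA(3) subset_refl] sum_distrib_left mult.assoc intro!: sum.cong)
    done
  also have "\<dots> = (\<Sum>a\<in>?A. \<Sum>b\<in>?B. \<Sum>c\<in>?C. \<Sum>q\<in>?T.
      if b \<otimes>\<^bsub>M\<^esub> c = q \<and> a \<otimes>\<^bsub>M\<^esub> q = z then f a * g b * h c else 0)"
    by (rule sum3_swap)
  also have "\<dots> = (\<Sum>a\<in>?A. \<Sum>b\<in>?B. \<Sum>c\<in>?C.
       if a \<otimes>\<^bsub>M\<^esub> (b \<otimes>\<^bsub>M\<^esub> c) = z then f a * g b * h c else 0)"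
  proof (intro sum.cong refl)
    fix a b c assume "a \<in> ?A" "b \<in> ?B" "c \<in> ?C"
    then have "b \<otimes>\<^bsub>M\<^esub> c \<in> ?T" by auto
    then show "(\<Sum>q\<in>?T. if b \<otimes>\<^bsub>M\<^esub> c = q \<and> a \<otimes>\<^bsub>M\<^esub> q = z then f a * g b * h c else 0) =
       (if a \<otimes>\<^bsub>M\<^esub> (b \<otimes>\<^bsub>M\<^esub> c) = z then f a * g b * h c else 0)"
      using sum_delta_cond[OF fT \<open>b \<otimes>\<^bsub>M\<^esub> c \<in> ?T\<close>, of "\<lambda>q. a \<otimes>\<^bsub>M\<^esub> q = z" "f a * g b * h c"] by simp
  qed
  finally show "(f \<otimes>\<^bsub>mon_alg M\<^esub> (g \<otimes>\<^bsub>mon_alg M\<^esub> h)) z =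
    (\<Sum>a\<in>{x. f x \<noteq> 0}. \<Sum>b\<in>{x. g x \<noteq> 0}. \<Sum>c\<in>{x. h x \<noteq> 0}.
       if a \<otimes>\<^bsub>M\<^esub> (b \<otimes>\<^bsub>M\<^esub> c) = z then f a * g b * h c else 0)" .
qed

lemma ma_one_carrier: "monoid M \<Longrightarrow> (\<one>\<^bsub>mon_alg M\<^esub> :: 'm \<Rightarrow> 'k::field) \<in> carrier (mon_alg M)"
proof -
  assume M: "monoid M"
  have "{x. (\<one>\<^bsub>mon_alg M\<^esub> :: 'm \<Rightarrow> 'k) x \<noteq> 0} \<subseteq> {\<one>\<^bsub>M\<^esub>}" by (auto simp: ma_one)
  then have "finite {x. (\<one>\<^bsub>mon_alg M\<^esub> :: 'm \<Rightarrow> 'k) x \<noteq> 0}" by (rule finite_subset) simp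
  then show ?thesis using M by (auto simp: ma_carrier ma_one monoid.one_closed)
qed

lemma ma_add_carrier:
  "f \<in> carrier (mon_alg M) \<Longrightarrow> g \<in> carrier (mon_alg M) \<Longrightarrow> (f \<oplus>\<^bsub>mon_alg M\<^esub> g :: 'm \<Rightarrow> 'k::field) \<in> carrier (mon_alg M)"
proof -
  assume f: "f \<in> carrier (mon_alg M)" and g: "g \<in> carrier (mon_alg M)"
  have "{x. f x + g x \<noteq> 0} \<subseteq> {x. f x \<noteq> 0} \<union> {x. g x \<noteq> 0}" by auto
  then have "finite {x. f x + g x \<noteq> 0}" by (rule finite_subset) (use f g in \<open>auto simp: ma_carrier\<close>)
  then show ?thesis using f g by (auto simp: ma_carrier ma_add)
qed

lemma ma_ring:
  assumes M: "monoid M"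
  shows "ring (mon_alg M :: ('m \<Rightarrow> 'k::field) ring)"
proof (rule ringI)
  let ?R = "mon_alg M :: ('m \<Rightarrow> 'k::field) ring"
  show "abelian_group ?R"
  proof (rule abelian_groupI)
    show "\<And>x y. x \<in> carrier ?R \<Longrightarrow> y \<in> carrier ?R \<Longrightarrow> x \<oplus>\<^bsub>?R\<^esub> y \<in> carrier ?R"
      by (rule ma_add_carrier)
    show "\<zero>\<^bsub>?R\<^esub> \<in> carrier ?R" by (simp add: ma_carrier ma_zero)
    show "\<And>x y z. x \<oplus>\<^bsub>?R\<^esub> y \<oplus>\<^bsub>?R\<^esub> z = x \<oplus>\<^bsub>?R\<^esub> (y \<oplus>\<^bsub>?R\<^esub> z)"
      by (simp add: ma_add add.assoc)
    show "\<And>x y. x \<oplus>\<^bsub>?R\<^esub> y = y \<oplus>\<^bsub>?R\<^esub> x"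
      by (simp add: ma_add add.commute)
    show "\<And>x. \<zero>\<^bsub>?R\<^esub> \<oplus>\<^bsub>?R\<^esub> x = x"
      by (simp add: ma_add ma_zero)
    show "\<exists>y\<in>carrier ?R. y \<oplus>\<^bsub>?R\<^esub> x = \<zero>\<^bsub>?R\<^esub>" if "x \<in> carrier ?R" for x
      by (rule bexI[of _ "\<lambda>z. - x z"]) (use that in \<open>auto simp: ma_add ma_zero ma_carrier\<close>)
  qed
  show "monoid ?R"
  proof (rule monoidI)
    show "\<And>x y. x \<in> carrier ?R \<Longrightarrow> y \<in> carrier ?R \<Longrightarrow> x \<otimes>\<^bsub>?R\<^esub> y \<in> carrier ?R"
      by (rule ma_mult_closed[OF M])
    show "\<one>\<^bsub>?R\<^esub> \<in> carrier ?R" by (rule ma_one_carrier[OF M])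
    show "x \<otimes>\<^bsub>?R\<^esub> y \<otimes>\<^bsub>?R\<^esub> z = x \<otimes>\<^bsub>?R\<^esub> (y \<otimes>\<^bsub>?R\<^esub> z)"
      if "x \<in> carrier ?R" "y \<in> carrier ?R" "z \<in> carrier ?R" for x y z
    proof
      fix w
      show "(x \<otimes>\<^bsub>?R\<^esub> y \<otimes>\<^bsub>?R\<^esub> z) w = (x \<otimes>\<^bsub>?R\<^esub> (y \<otimes>\<^bsub>?R\<^esub> z)) w"
        unfolding ma_triple[OF M that]
      proof (intro sum.cong refl)
        fix a b c assume "a \<in> {x'. x x' \<noteq> 0}" "b \<in> {x. y x \<noteq> 0}" "c \<in> {x. z x \<noteq> 0}"
        then have "a \<in> carrier M" "b \<in> carrier M" "c \<in> carrier M" using that ma_supp_carrier by auto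
        then have "a \<otimes>\<^bsub>M\<^esub> b \<otimes>\<^bsub>M\<^esub> c = a \<otimes>\<^bsub>M\<^esub> (b \<otimes>\<^bsub>M\<^esub> c)" using M by (simp add: monoid.m_assoc)
        then show "(if a \<otimes>\<^bsub>M\<^esub> b \<otimes>\<^bsub>M\<^esub> c = w then x a * y b * z c else 0) = (if a \<otimes>\<^bsub>M\<^esub> (b \<otimes>\<^bsub>M\<^esub> c) = w then x a * y b * z c else 0)" by simp
      qed
    qed
    show "\<one>\<^bsub>?R\<^esub> \<otimes>\<^bsub>?R\<^esub> x = x" if x: "x \<in> carrier ?R" for x
    proof
      fix z
      have "(\<one>\<^bsub>?R\<^esub> \<otimes>\<^bsub>?R\<^esub> x) z = (\<Sum>a\<in>{\<one>\<^bsub>M\<^esub>}. \<Sum>y\<in>{y. x y \<noteq> 0}. if a \<otimes>\<^bsub>M\<^esub> y = z then \<one>\<^bsub>?R\<^esub> a * x y else 0)"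
        by (rule ma_mult_eq[OF ma_one_carrier[OF M] x]) (use x in \<open>auto simp: ma_one ma_carrier\<close>)
      also have "\<dots> = (\<Sum>y\<in>{y. x y \<noteq> 0}. if \<one>\<^bsub>M\<^esub> \<otimes>\<^bsub>M\<^esub> y = z then x y else 0)"
        by (simp add: ma_one cong: if_cong)
      also have "\<dots> = (\<Sum>y\<in>{y. x y \<noteq> 0}. if y = z then x y else 0)"
      proof (intro sum.cong refl)
        fix y assume "y \<in> {y. x y \<noteq> 0}"
        then have "y \<in> carrier M" using ma_supp_carrier[OF x] by auto
        then show "(if \<one>\<^bsub>M\<^esub> \<otimes>\<^bsub>M\<^esub> y = z then x y else 0) = (if y = z then x y else 0)"
          using M by (simp add: monoid.l_one)
      qed
      also have "\<dots> = x z" using x by (auto simp: ma_carrier sum.delta')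
      finally show "(\<one>\<^bsub>?R\<^esub> \<otimes>\<^bsub>?R\<^esub> x) z = x z" .
    qed
    show "x \<otimes>\<^bsub>?R\<^esub> \<one>\<^bsub>?R\<^esub> = x" if x: "x \<in> carrier ?R" for x
    proof
      fix z
      have "(x \<otimes>\<^bsub>?R\<^esub> \<one>\<^bsub>?R\<^esub>) z = (\<Sum>y\<in>{y. x y \<noteq> 0}. \<Sum>a\<in>{\<one>\<^bsub>M\<^esub>}. if y \<otimes>\<^bsub>M\<^esub> a = z then x y * \<one>\<^bsub>?R\<^esub> a else 0)"
        by (rule ma_mult_eq[OF x ma_one_carrier[OF M]]) (use x in \<open>auto simp: ma_one ma_carrier\<close>)
      also have "\<dots> = (\<Sum>y\<in>{y. x y \<noteq> 0}. if y \<otimes>\<^bsub>M\<^esub> \<one>\<^bsub>M\<^esub> = z then x y else 0)"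
        by (simp add: ma_one cong: if_cong)
      also have "\<dots> = (\<Sum>y\<in>{y. x y \<noteq> 0}. if y = z then x y else 0)"
      proof (intro sum.cong refl)
        fix y assume "y \<in> {y. x y \<noteq> 0}"
        then have "y \<in> carrier M" using ma_supp_carrier[OF x] by auto
        then show "(if y \<otimes>\<^bsub>M\<^esub> \<one>\<^bsub>M\<^esub> = z then x y else 0) = (if y = z then x y else 0)"
          using M by (simp add: monoid.r_one)
      qed
      also have "\<dots> = x z" using x by (auto simp: ma_carrier sum.delta')
      finally show "(x \<otimes>\<^bsub>?R\<^esub> \<one>\<^bsub>?R\<^esub>) z = x z" .
    qed
  qed
  show "(x \<oplus>\<^bsub>?R\<^esub> y) \<otimes>\<^bsub>?R\<^esub> z = x \<otimes>\<^bsub>?R\<^esub> z \<oplus>\<^bsub>?R\<^esub> y \<otimes>\<^bsub>?R\<^esub> z"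
    if x: "x \<in> carrier ?R" and y: "y \<in> carrier ?R" and z: "z \<in> carrier ?R" for x y z
  proof
    fix w
    let ?A = "{a. x a \<noteq> 0} \<union> {a. y a \<noteq> 0}" and ?C = "{a. z a \<noteq> 0}"
    have fA: "finite ?A" "finite ?C" using x y z by (auto simp: ma_carrier)
    have xy: "x \<oplus>\<^bsub>?R\<^esub> y \<in> carrier ?R" by (rule ma_add_carrier[OF x y])
    have "((x \<oplus>\<^bsub>?R\<^esub> y) \<otimes>\<^bsub>?R\<^esub> z) w = (\<Sum>a\<in>?A. \<Sum>c\<in>?C. if a \<otimes>\<^bsub>M\<^esub> c = w then (x a + y a) * z c else 0)"
      by (subst ma_mult_eq[OF xy z fA(1) _ fA(2)]) (auto simp: ma_add cong: if_cong)
    also have "\<dots> = (\<Sum>a\<in>?A. \<Sum>c\<in>?C. (if a \<otimes>\<^bsub>M\<^esub> c = w then x a * z c else 0) + (if a \<otimes>\<^bsub>M\<^esub> c = w then y a * z c else 0))"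
      by (intro sum.cong refl) (simp add: distrib_right)
    also have "\<dots> = (x \<otimes>\<^bsub>?R\<^esub> z) w + (y \<otimes>\<^bsub>?R\<^esub> z) w"
      by (simp add: sum.distrib ma_mult_eq[OF x z fA(1) _ fA(2)] ma_mult_eq[OF y z fA(1) _ fA(2)])
    finally show "((x \<oplus>\<^bsub>?R\<^esub> y) \<otimes>\<^bsub>?R\<^esub> z) w = (x \<otimes>\<^bsub>?R\<^esub> z \<oplus>\<^bsub>?R\<^esub> y \<otimes>\<^bsub>?R\<^esub> z) w"
      by (simp add: ma_add)
  qed
  show "z \<otimes>\<^bsub>?R\<^esub> (x \<oplus>\<^bsub>?R\<^esub> y) = z \<otimes>\<^bsub>?R\<^esub> x \<oplus>\<^bsub>?R\<^esub> z \<otimes>\<^bsub>?R\<^esub> y"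
    if x: "x \<in> carrier ?R" and y: "y \<in> carrier ?R" and z: "z \<in> carrier ?R" for x y z
  proof
    fix w
    let ?A = "{a. x a \<noteq> 0} \<union> {a. y a \<noteq> 0}" and ?C = "{a. z a \<noteq> 0}"
    have fA: "finite ?A" "finite ?C" using x y z by (auto simp: ma_carrier)
    have xy: "x \<oplus>\<^bsub>?R\<^esub> y \<in> carrier ?R" by (rule ma_add_carrier[OF x y])
    have "(z \<otimes>\<^bsub>?R\<^esub> (x \<oplus>\<^bsub>?R\<^esub> y)) w = (\<Sum>c\<in>?C. \<Sum>a\<in>?A. if c \<otimes>\<^bsub>M\<^esub> a = w then z c * (x a + y a) else 0)"
      by (subst ma_mult_eq[OF z xy fA(2) _ fA(1)]) (auto simp: ma_add cong: if_cong)
    also have "\<dots> = (\<Sum>c\<in>?C. \<Sum>a\<in>?A. (if c \<otimes>\<^bsub>M\<^esub> a = w then z c * x a else 0) + (if c \<otimes>\<^bsub>M\<^esub> a = w then z c * y a else 0))"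
      by (intro sum.cong refl) (simp add: distrib_left)
    also have "\<dots> = (z \<otimes>\<^bsub>?R\<^esub> x) w + (z \<otimes>\<^bsub>?R\<^esub> y) w"
      by (simp add: sum.distrib ma_mult_eq[OF z x fA(2) _ fA(1)] ma_mult_eq[OF z y fA(2) _ fA(1)])
    finally show "(z \<otimes>\<^bsub>?R\<^esub> (x \<oplus>\<^bsub>?R\<^esub> y)) w = (z \<otimes>\<^bsub>?R\<^esub> x \<oplus>\<^bsub>?R\<^esub> z \<otimes>\<^bsub>?R\<^esub> y) w"
      by (simp add: ma_add)
  qed
qed


lemma ma_neg:
  assumes M: "monoid M" and f: "f \<in> carrier (mon_alg M :: ('m \<Rightarrow> 'k::field) ring)"
  shows "\<ominus>\<^bsub>mon_alg M\<^esub> f = (\<lambda>z. - f z)"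
proof -
  interpret R: ring "mon_alg M :: ('m \<Rightarrow> 'k) ring" by (rule ma_ring[OF M])
  have c: "(\<lambda>z. - f z) \<in> carrier (mon_alg M :: ('m \<Rightarrow> 'k) ring)" using f by (auto simp: ma_carrier)
  have e: "(\<lambda>z. - f z) \<oplus>\<^bsub>mon_alg M\<^esub> f = \<zero>\<^bsub>mon_alg M :: ('m \<Rightarrow> 'k) ring\<^esub>"
    unfolding ma_add ma_zero by simp
  show ?thesis by (rule R.minus_equality[OF e f c])
qed

lemma span_zero: "((\<lambda>_. 0) :: 'm \<Rightarrow> 'k::field) \<in> span_in M I"
  by (simp add: span_in_def ma_carrier)

lemma span_neg: "(a :: 'm \<Rightarrow> 'k::field) \<in> span_in M I \<Longrightarrow> (\<lambda>z. - a z) \<in> span_in M I"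
  by (simp add: span_in_def ma_carrier)

lemma span_add: "(a :: 'm \<Rightarrow> 'k::field) \<in> span_in M I \<Longrightarrow> b \<in> span_in M I \<Longrightarrow> (\<lambda>z. a z + b z) \<in> span_in M I"
proof -
  assume a: "a \<in> span_in M I" and b: "b \<in> span_in M I"
  have "{x. a x + b x \<noteq> 0} \<subseteq> {x. a x \<noteq> 0} \<union> {x. b x \<noteq> 0}" by auto
  moreover have "finite ({x. a x \<noteq> 0} \<union> {x. b x \<noteq> 0})" using a b by (simp add: span_in_def ma_carrier)
  ultimately have "finite {x. a x + b x \<noteq> 0}" by (rule finite_subset)
  moreover have "\<forall>x. a x + b x \<noteq> 0 \<longrightarrow> x \<in> I" using a b by (metis (mono_tags, lifting) add_0 mem_Collect_eq span_in_def)
  moreover have "\<forall>x. x \<notin> carrier M \<longrightarrow> a x + b x = 0" using a b by (simp add: span_in_def ma_carrier)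
  ultimately show ?thesis by (simp add: span_in_def ma_carrier)
qed

lemma span_ideal:
  assumes M: "monoid M" and I: "I \<subseteq> carrier M"
    and cl: "\<And>q s. q \<in> I \<Longrightarrow> s \<in> carrier M \<Longrightarrow> q \<otimes>\<^bsub>M\<^esub> s \<in> I \<and> s \<otimes>\<^bsub>M\<^esub> q \<in> I"
  shows "ideal (span_in M I) (mon_alg M :: ('m \<Rightarrow> 'k::field) ring)"
proof -
  interpret R: ring "mon_alg M :: ('m \<Rightarrow> 'k) ring" by (rule ma_ring[OF M])
  have sub: "span_in M I \<subseteq> carrier (mon_alg M :: ('m \<Rightarrow> 'k) ring)" by (auto simp: span_in_def)
  show ?thesis
  proof (rule idealI)
    show "ring (mon_alg M :: ('m \<Rightarrow> 'k) ring)" by (rule R.ring_axioms)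
    show "subgroup (span_in M I) (add_monoid (mon_alg M :: ('m \<Rightarrow> 'k) ring))"
    proof (rule R.add.subgroupI)
      show "span_in M I \<subseteq> carrier (mon_alg M :: ('m \<Rightarrow> 'k) ring)" by (rule sub)
      show "span_in M I \<noteq> {}" using span_zero[of M I] by (auto simp del: span_in_def)
      show "\<ominus>\<^bsub>mon_alg M\<^esub> a \<in> span_in M I" if "a \<in> span_in M I" for a :: "'m \<Rightarrow> 'k"
      proof -
        have a: "a \<in> carrier (mon_alg M :: ('m \<Rightarrow> 'k) ring)" using that sub by blast
        show ?thesis unfolding ma_neg[OF M a] by (rule span_neg[OF that])
      qed
      show "a \<oplus>\<^bsub>mon_alg M\<^esub> b \<in> span_in M I" if "a \<in> span_in M I" "b \<in> span_in M I" for a b :: "'m \<Rightarrow> 'k"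
        unfolding ma_add by (rule span_add[OF that])
    qed
    show "x \<otimes>\<^bsub>mon_alg M\<^esub> a \<in> span_in M I"
      if a: "a \<in> span_in M I" and x: "x \<in> carrier (mon_alg M :: ('m \<Rightarrow> 'k) ring)" for a x :: "'m \<Rightarrow> 'k"
    proof -
      have ac: "a \<in> carrier (mon_alg M :: ('m \<Rightarrow> 'k) ring)" using a sub by auto
      have "z \<in> I" if nz: "(x \<otimes>\<^bsub>mon_alg M\<^esub> a) z \<noteq> 0" for z
      proof -
        obtain u v where uv: "x u \<noteq> 0" "a v \<noteq> 0" "u \<otimes>\<^bsub>M\<^esub> v = z" using ma_mult_supp[OF x ac nz] by blast
        have "v \<in> I" using a uv(2) by (simp add: span_in_def)
        moreover have "u \<in> carrier M" using ma_supp_carrier[OF x uv(1)] .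
        ultimately show ?thesis using cl[of v u] uv(3) by simp
      qed
      then show ?thesis using ma_mult_closed[OF M x ac] by (auto simp: span_in_def)
    qed
    show "a \<otimes>\<^bsub>mon_alg M\<^esub> x \<in> span_in M I"
      if a: "a \<in> span_in M I" and x: "x \<in> carrier (mon_alg M :: ('m \<Rightarrow> 'k) ring)" for a x :: "'m \<Rightarrow> 'k"
    proof -
      have ac: "a \<in> carrier (mon_alg M :: ('m \<Rightarrow> 'k) ring)" using a sub by auto
      have "z \<in> I" if nz: "(a \<otimes>\<^bsub>mon_alg M\<^esub> x) z \<noteq> 0" for z
      proof -
        obtain u v where uv: "a u \<noteq> 0" "x v \<noteq> 0" "u \<otimes>\<^bsub>M\<^esub> v = z" using ma_mult_supp[OF ac x nz] by blast
        have "u \<in> I" using a uv(1) by (simp add: span_in_def)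
        moreover have "v \<in> carrier M" using ma_supp_carrier[OF x uv(2)] .
        ultimately show ?thesis using cl[of u v] uv(3) by simp
      qed
      then show ?thesis using ma_mult_closed[OF M ac x] by (auto simp: span_in_def)
    qed
  qed
qed



abbreviation cls :: "nat \<Rightarrow> nat list \<Rightarrow> nat list set" where "cls n w \<equiv> Sn_cong n `` {w}"

lemma words_append[simp]: "u @ v \<in> words n \<longleftrightarrow> u \<in> words n \<and> v \<in> words n" by (auto simp: words_def)
lemma words_Cons[simp]: "j # v \<in> words n \<longleftrightarrow> j < n \<and> v \<in> words n" by (auto simp: words_def)
lemma words_Nil[simp]: "[] \<in> words n" by (simp add: words_def)
lemma upt_words[simp]: "[i..<n] \<in> words n" by (auto simp: words_def)
lemma rotate_words[simp]: "rotate k w \<in> words n \<longleftrightarrow> w \<in> words n" by (simp add: words_def)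

lemma rel0_words: "(x,y) \<in> Sn_rel0 n \<Longrightarrow> x \<in> words n \<and> y \<in> words n"
  by (auto simp: Sn_rel0_def)

lemma rel0_length: "(x,y) \<in> Sn_rel0 n \<Longrightarrow> length x = length y"
  by (auto simp: Sn_rel0_def)

lemma cong_equiv: "equiv UNIV (Sn_cong n)"
  unfolding Sn_cong_def
  by (rule equivI) (auto simp: refl_rtrancl sym_rtrancl sym_Un_converse intro: trans_rtrancl)

lemma cong_sym: "(x,y) \<in> Sn_cong n \<Longrightarrow> (y,x) \<in> Sn_cong n"
  using cong_equiv[of n] by (meson equivE symD)

lemma cong_trans: "(x,y) \<in> Sn_cong n \<Longrightarrow> (y,z) \<in> Sn_cong n \<Longrightarrow> (x,z) \<in> Sn_cong n"
  unfolding Sn_cong_def by (rule rtrancl_trans)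

lemma cong_refl[simp]: "(x,x) \<in> Sn_cong n"
  unfolding Sn_cong_def by simp

lemma cong_words: "(x,y) \<in> Sn_cong n \<Longrightarrow> x \<in> words n \<Longrightarrow> y \<in> words n"
  unfolding Sn_cong_def by (induction rule: rtrancl_induct) (auto dest: rel0_words)

lemma cong_length: "(x,y) \<in> Sn_cong n \<Longrightarrow> length x = length y"
  unfolding Sn_cong_def by (induction rule: rtrancl_induct) (auto dest: rel0_length)

lemma rel0_ctx:
  assumes "(x,y) \<in> Sn_rel0 n" "u \<in> words n" "v \<in> words n"
  shows "(u@x@v, u@y@v) \<in> Sn_rel0 n"
proof -
  from assms(1) obtain u0 v0 k where e: "x = u0 @ [0..<n] @ v0" "y = u0 @ rotate k [0..<n] @ v0"
    "u0 \<in> words n" "v0 \<in> words n" "k < n"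
    by (auto simp: Sn_rel0_def)
  show ?thesis unfolding Sn_rel0_def
    by (rule CollectI, rule exI[of _ "u@u0"], rule exI[of _ "v0@v"], rule exI[of _ k]) (use e assms in auto)
qed

lemma cong_ctx:
  assumes "(x,y) \<in> Sn_cong n" "u \<in> words n" "v \<in> words n"
  shows "(u@x@v, u@y@v) \<in> Sn_cong n"
  using assms(1) unfolding Sn_cong_def
proof (induction rule: rtrancl_induct)
  case base then show ?case by simp
next
  case (step b c)
  then have "(u@b@v, u@c@v) \<in> Sn_rel0 n \<union> (Sn_rel0 n)\<inverse>"
    using rel0_ctx[OF _ assms(2,3)] by auto
  with step.IH show ?case by (rule rtrancl_into_rtrancl)
qed

lemma cong_app:
  assumes "(x,y) \<in> Sn_cong n" "(x',y') \<in> Sn_cong n" "x \<in> words n" "x' \<in> words n"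
  shows "(x@x', y@y') \<in> Sn_cong n"
proof -
  have "(x@x', y@x') \<in> Sn_cong n" using cong_ctx[OF assms(1), of "[]" x'] assms by simp
  moreover have "(y@x', y@y') \<in> Sn_cong n"
    using cong_ctx[OF assms(2), of y "[]"] cong_words[OF assms(1,3)] by simp
  ultimately show ?thesis by (rule cong_trans)
qed

lemma cls_eq_iff: "cls n x = cls n y \<longleftrightarrow> (x,y) \<in> Sn_cong n"
  using equiv_class_eq_iff[OF cong_equiv, of x y n] by auto

lemma cls_self[simp]: "x \<in> cls n x" by simp

lemma carrier_Sn: "carrier (Sn n) = cls n ` words n"
  by (auto simp: Sn_def quotient_def)

lemma one_Sn: "\<one>\<^bsub>Sn n\<^esub> = cls n []" by (simp add: Sn_def)

lemma mult_Sn: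
  assumes x: "x \<in> words n" and y: "y \<in> words n"
  shows "cls n x \<otimes>\<^bsub>Sn n\<^esub> cls n y = cls n (x @ y)"
proof -
  let ?a = "SOME w. w \<in> cls n x" and ?b = "SOME w. w \<in> cls n y"
  have a: "?a \<in> cls n x" by (rule someI[of _ x]) simp
  have b: "?b \<in> cls n y" by (rule someI[of _ y]) simp
  have "(x @ y, ?a @ ?b) \<in> Sn_cong n" using a b x y by (intro cong_app) auto
  then have "cls n (?a @ ?b) = cls n (x @ y)" using cls_eq_iff cong_sym by metis
  then show ?thesis by (simp add: Sn_def)
qed

lemma monoid_Sn: "monoid (Sn n)"
proof (rule monoidI)
  show "x \<otimes>\<^bsub>Sn n\<^esub> y \<in> carrier (Sn n)" if "x \<in> carrier (Sn n)" "y \<in> carrier (Sn n)" for x y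
    using that by (auto simp: carrier_Sn mult_Sn)
  show "\<one>\<^bsub>Sn n\<^esub> \<in> carrier (Sn n)" by (auto simp: carrier_Sn one_Sn)
  show "x \<otimes>\<^bsub>Sn n\<^esub> y \<otimes>\<^bsub>Sn n\<^esub> z = x \<otimes>\<^bsub>Sn n\<^esub> (y \<otimes>\<^bsub>Sn n\<^esub> z)"
    if "x \<in> carrier (Sn n)" "y \<in> carrier (Sn n)" "z \<in> carrier (Sn n)" for x y z
    using that by (auto simp: carrier_Sn mult_Sn)
  show "\<one>\<^bsub>Sn n\<^esub> \<otimes>\<^bsub>Sn n\<^esub> x = x" if "x \<in> carrier (Sn n)" for x
    using that by (auto simp: carrier_Sn mult_Sn one_Sn)
  show "x \<otimes>\<^bsub>Sn n\<^esub> \<one>\<^bsub>Sn n\<^esub> = x" if "x \<in> carrier (Sn n)" for x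
    using that by (auto simp: carrier_Sn mult_Sn one_Sn)
qed

lemma rot_rel: "k < n \<Longrightarrow> u \<in> words n \<Longrightarrow> v \<in> words n \<Longrightarrow>
    (u @ [0..<n] @ v, u @ rotate k [0..<n] @ v) \<in> Sn_cong n"
  unfolding Sn_cong_def Sn_rel0_def by (rule r_into_rtrancl) blast

lemma rotate_upt: "j < n \<Longrightarrow> rotate j [0..<n] = [j..<n] @ [0..<j]"
  by (simp add: rotate_drop_take take_upt)

lemma zrot: "j < n \<Longrightarrow> ([0..<n], [Suc j..<n] @ [0..<j] @ [j]) \<in> Sn_cong n"
proof (cases "Suc j < n")
  case True
  assume "j < n"
  have "([] @ [0..<n] @ [], [] @ rotate (Suc j) [0..<n] @ []) \<in> Sn_cong n"
    by (rule rot_rel[OF True words_Nil words_Nil])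
  then have "([0..<n], [Suc j..<n] @ [0..<Suc j]) \<in> Sn_cong n"
    unfolding rotate_upt[OF True] by simp
  then show ?thesis by simp
next
  case False
  assume "j < n"
  then have "n = Suc j" using False by simp
  then show ?thesis by simp
qed

lemma zrot2: "j < n \<Longrightarrow> ([0..<n], [j..<n] @ [0..<j]) \<in> Sn_cong n"
  using rot_rel[of j n "[]" "[]"] by (simp add: rotate_upt)

lemma zletter:
  assumes j: "j < n"
  shows "([j] @ [0..<n], [0..<n] @ [j]) \<in> Sn_cong n"
proof -
  have 1: "([j] @ [0..<n] @ [], [j] @ ([Suc j..<n] @ [0..<j] @ [j]) @ []) \<in> Sn_cong n"
    by (rule cong_ctx[OF zrot[OF j]]) (use j in auto)
  have e: "[j] @ ([Suc j..<n] @ [0..<j] @ [j]) @ [] = [] @ ([j..<n] @ [0..<j]) @ [j]"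
    using j by (simp add: upt_conv_Cons)
  have 2: "([] @ ([j..<n] @ [0..<j]) @ [j], [] @ [0..<n] @ [j]) \<in> Sn_cong n"
    by (rule cong_ctx[OF cong_sym[OF zrot2[OF j]]]) (use j in auto)
  show ?thesis using cong_trans[OF 1[unfolded e] 2] by simp
qed

lemma zcentral: "v \<in> words n \<Longrightarrow> (v @ [0..<n], [0..<n] @ v) \<in> Sn_cong n"
proof (induction v)
  case Nil then show ?case by simp
next
  case (Cons j v)
  then have j: "j < n" and v: "v \<in> words n" by auto
  have 1: "(j # v @ [0..<n], j # [0..<n] @ v) \<in> Sn_cong n"
    using cong_ctx[OF Cons.IH[OF v], of "[j]" "[]"] j by simp
  have 2: "(j # [0..<n] @ v, [0..<n] @ j # v) \<in> Sn_cong n"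
    using cong_ctx[OF zletter[OF j], of "[]" v] v by simp
  show ?case using cong_trans[OF 1 2] by simp
qed



lemma upt_words2[simp]: "j \<le> n \<Longrightarrow> [i..<j] \<in> words n" by (auto simp: words_def)

lemma mp_ideal: "mon_prime S Q \<Longrightarrow> mon_ideal S Q" by (simp add: mon_prime_def)

lemma Q_sub: "mon_prime (Sn n) Q \<Longrightarrow> Y \<in> Q \<Longrightarrow> \<exists>w\<in>words n. Y = cls n w"
  unfolding mon_prime_def mon_ideal_def carrier_Sn by blast

lemma Q_ideal_cls:
  assumes P: "mon_prime (Sn n) Q" and w: "cls n w \<in> Q" "w \<in> words n" and u: "u \<in> words n" and v: "v \<in> words n"
  shows "cls n (u @ w @ v) \<in> Q"
proof -
  have I: "mon_ideal (Sn n) Q" using P by (simp add: mon_prime_def)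
  have "cls n w \<otimes>\<^bsub>Sn n\<^esub> cls n v \<in> Q" using I w v by (auto simp: mon_ideal_def carrier_Sn)
  then have "cls n (w @ v) \<in> Q" using mult_Sn[OF w(2) v] by simp
  then have "cls n u \<otimes>\<^bsub>Sn n\<^esub> cls n (w @ v) \<in> Q" using I u by (auto simp: mon_ideal_def carrier_Sn)
  then show ?thesis using mult_Sn[OF u, of "w @ v"] w v by simp
qed

lemma one_notin_Q:
  assumes P: "mon_prime (Sn n) Q"
  shows "cls n [] \<notin> Q"
proof
  assume "cls n [] \<in> Q"
  then have "\<forall>s\<in>carrier (Sn n). s \<in> Q"
    using P unfolding mon_prime_def mon_ideal_def
    by (metis monoid.l_one monoid_Sn one_Sn)
  then have "Q = carrier (Sn n)" using P unfolding mon_prime_def mon_ideal_def by blast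
  then show False using P by (simp add: mon_prime_def)
qed

lemma top_in_Q:
  assumes P: "mon_prime (Sn n) Q"
  shows "cls n [0..<n] \<in> Q"
proof -
  have I: "mon_ideal (Sn n) Q" using P by (simp add: mon_prime_def)
  have key: "cls n w \<in> Q \<Longrightarrow> w \<in> words n \<Longrightarrow> cls n [0..<n] \<in> Q" for w
  proof (induction w)
    case Nil then show ?case using one_notin_Q[OF P] by simp
  next
    case (Cons j w)
    then have j: "j < n" and w: "w \<in> words n" by auto
    let ?t = "[Suc j..<n] @ [0..<j]"
    have t: "?t \<in> words n" using j by simp
    have "cls n [0..<n] \<otimes>\<^bsub>Sn n\<^esub> s \<otimes>\<^bsub>Sn n\<^esub> cls n w \<in> Q" if s: "s \<in> carrier (Sn n)" for s
    proof -
      obtain v where v: "v \<in> words n" "s = cls n v" using s by (auto simp: carrier_Sn)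
      have e: "cls n [0..<n] \<otimes>\<^bsub>Sn n\<^esub> s \<otimes>\<^bsub>Sn n\<^esub> cls n w = cls n (([0..<n] @ v) @ w)"
        using v w by (simp add: mult_Sn)
      have r1: "(([0..<n] @ v) @ w, (v @ [0..<n]) @ w) \<in> Sn_cong n"
        using cong_ctx[OF cong_sym[OF zcentral[OF v(1)]], of "[]" w] w by simp
      have r2: "((v @ [0..<n]) @ w, (v @ ?t) @ (j # w) @ []) \<in> Sn_cong n"
        using cong_ctx[OF zrot[OF j], of v w] v w by simp
      have "cls n ((v @ ?t) @ (j # w) @ []) \<in> Q"
        by (rule Q_ideal_cls[OF P Cons.prems(1)]) (use v w j in auto)
      moreover have "cls n (([0..<n] @ v) @ w) = cls n ((v @ ?t) @ (j # w) @ [])"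
        using cls_eq_iff cong_trans[OF r1 r2] by blast
      ultimately show ?thesis using e by simp
    qed
    then have "cls n [0..<n] \<in> Q \<or> cls n w \<in> Q"
      using P w unfolding mon_prime_def by (auto simp: carrier_Sn)
    then show ?case using Cons.IH w by blast
  qed
  obtain q where "q \<in> Q" using I by (auto simp: mon_ideal_def)
  then obtain w where "w \<in> words n" "q = cls n w" using Q_sub[OF P] by blast
  then show ?thesis using key \<open>q \<in> Q\<close> by blast
qed

lemma notQ_single:
  assumes P: "mon_prime (Sn n) Q" and w: "w \<in> words n" and nq: "cls n w \<notin> Q"
  shows "cls n w = {w}"
proof (rule ccontr)
  assume "cls n w \<noteq> {w}"
  then obtain y where "y \<in> cls n w" "y \<noteq> w" by auto
  then have "(w, y) \<in> (Sn_rel0 n \<union> (Sn_rel0 n)\<inverse>)\<^sup>*" "w \<noteq> y" by (auto simp: Sn_cong_def)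
  then obtain w' where "(w, w') \<in> Sn_rel0 n \<union> (Sn_rel0 n)\<inverse>"
    by (metis converse_rtranclE)
  then obtain u v k where uvk: "u \<in> words n" "v \<in> words n" "k < n"
      "w = u @ [0..<n] @ v \<or> w = u @ rotate k [0..<n] @ v"
    by (auto simp: Sn_rel0_def)
  have "(w, u @ [0..<n] @ v) \<in> Sn_cong n"
    using uvk rot_rel[OF uvk(3,1,2)] cong_sym by auto
  then have "cls n w = cls n (u @ [0..<n] @ v)" using cls_eq_iff by blast
  moreover have "cls n (u @ [0..<n] @ v) \<in> Q"
    by (rule Q_ideal_cls[OF P top_in_Q[OF P]]) (use uvk in auto)
  ultimately show False using nq by simp
qed



lemma free_carrier[simp]: "carrier (free_mon m) = words m" by (simp add: free_mon_def)
lemma free_mult[simp]: "x \<otimes>\<^bsub>free_mon m\<^esub> y = x @ y" by (simp add: free_mon_def)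
lemma free_one[simp]: "\<one>\<^bsub>free_mon m\<^esub> = []" by (simp add: free_mon_def)

lemma monoid_free: "monoid (free_mon m)"
  by (rule monoidI) auto

lemma ma_mult_split:
  fixes f g :: "'m \<Rightarrow> 'k::field"
  assumes f: "f \<in> carrier (mon_alg M)" and g: "g \<in> carrier (mon_alg M)"
    and D: "finite D" "D \<subseteq> {(x, y). x \<in> carrier M \<and> y \<in> carrier M \<and> x \<otimes>\<^bsub>M\<^esub> y = z}"
    and comp: "\<And>x y. x \<in> carrier M \<Longrightarrow> y \<in> carrier M \<Longrightarrow> f x \<noteq> 0 \<Longrightarrow> g y \<noteq> 0 \<Longrightarrow> x \<otimes>\<^bsub>M\<^esub> y = z \<Longrightarrow> (x, y) \<in> D"
  shows "(f \<otimes>\<^bsub>mon_alg M\<^esub> g) z = (\<Sum>(x,y)\<in>D. f x * g y)"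
proof -
  let ?P = "{(x, y). x \<in> carrier M \<and> y \<in> carrier M \<and> f x \<noteq> 0 \<and> g y \<noteq> 0 \<and> x \<otimes>\<^bsub>M\<^esub> y = z}"
  have "(f \<otimes>\<^bsub>mon_alg M\<^esub> g) z = (\<Sum>(x,y)\<in>?P. f x * g y)"
    by (simp add: mon_alg_def)
  also have "\<dots> = (\<Sum>(x,y)\<in>D. f x * g y)"
  proof (rule sum.mono_neutral_left[OF D(1)])
    show "?P \<subseteq> D" using comp by auto
    show "\<forall>i\<in>D - ?P. (case i of (x, y) \<Rightarrow> f x * g y) = 0" using D(2) by auto
  qed
  finally show ?thesis .
qed


lemma double_delta:
  assumes "finite A" "finite B" "u \<in> A" "v \<in> B"
    and "\<And>a c. a \<in> A \<Longrightarrow> c \<in> B \<Longrightarrow> F a c \<noteq> 0 \<Longrightarrow> a = u \<and> c = v"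
  shows "(\<Sum>a\<in>A. \<Sum>c\<in>B. F a c) = (F u v :: 'a::comm_monoid_add)"
proof -
  have "(\<Sum>a\<in>A. \<Sum>c\<in>B. F a c) = (\<Sum>a\<in>A. if a = u then F u v else 0)"
  proof (rule sum.cong[OF refl])
    fix a assume a: "a \<in> A"
    show "(\<Sum>c\<in>B. F a c) = (if a = u then F u v else 0)"
    proof (cases "a = u")
      case True
      have "(\<Sum>c\<in>B. F a c) = (\<Sum>c\<in>B. if c = v then F u v else 0)"
        by (rule sum.cong[OF refl]) (use assms(5)[OF a] True in fastforce)
      then show ?thesis using True assms(2,4) by (simp add: sum.delta')
    next
      case False
      then show ?thesis using assms(5)[OF a] by (auto intro!: sum.neutral)
    qed
  qed
  then show ?thesis using assms(1,3) by (simp add: sum.delta')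
qed

definition Wset :: "nat \<Rightarrow> nat list set set \<Rightarrow> nat list set" where
  "Wset n Q = {w \<in> words n. cls n w \<in> Q}"

definition liftQ :: "nat \<Rightarrow> nat list set set \<Rightarrow> (nat list set \<Rightarrow> 'k::field) \<Rightarrow> nat list \<Rightarrow> 'k" where
  "liftQ n Q f = (\<lambda>w. if w \<in> words n \<and> cls n w \<notin> Q then f (cls n w) else 0)"

context
  fixes n :: nat and Q :: "nat list set set"
  assumes P: "mon_prime (Sn n) Q"
begin

lemma W_word_ideal: "word_ideal n (Wset n Q)"
  unfolding word_ideal_def Wset_def using Q_ideal_cls[OF P] by auto

lemma J_ideal: "ideal (span_in (free_mon n) (Wset n Q)) (mon_alg (free_mon n) :: (nat list \<Rightarrow> 'k::field) ring)"
proof (rule span_ideal[OF monoid_free])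
  show "Wset n Q \<subseteq> carrier (free_mon n)" by (auto simp: Wset_def)
  show "q \<otimes>\<^bsub>free_mon n\<^esub> s \<in> Wset n Q \<and> s \<otimes>\<^bsub>free_mon n\<^esub> q \<in> Wset n Q"
    if "q \<in> Wset n Q" "s \<in> carrier (free_mon n)" for q s
    using W_word_ideal that unfolding word_ideal_def
    by (metis append_Nil append_Nil2 free_carrier free_mult words_Nil)
qed

lemma cls_notQ_inj: "inj_on (cls n) {w \<in> words n. cls n w \<notin> Q}"
proof (rule inj_onI)
  fix x y assume x: "x \<in> {w \<in> words n. cls n w \<notin> Q}" and y: "y \<in> {w \<in> words n. cls n w \<notin> Q}"
    and e: "cls n x = cls n y"
  have "cls n x = {x}" using x notQ_single[OF P] by auto
  moreover have "y \<in> cls n y" by simp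
  ultimately show "x = y" using e by auto
qed

lemma lift_carrier:
  assumes f: "f \<in> carrier (mon_alg (Sn n) :: (nat list set \<Rightarrow> 'k::field) ring)"
  shows "liftQ n Q f \<in> carrier (mon_alg (free_mon n) :: (nat list \<Rightarrow> 'k) ring)"
proof -
  let ?S = "{w \<in> words n. cls n w \<notin> Q \<and> f (cls n w) \<noteq> 0}"
  have "cls n ` ?S \<subseteq> {x. f x \<noteq> 0}" by auto
  then have "finite (cls n ` ?S)" using f by (auto simp: ma_carrier intro: finite_subset)
  moreover have "inj_on (cls n) ?S" using cls_notQ_inj by (rule inj_on_subset) auto
  ultimately have "finite ?S" using finite_imageD by blast
  moreover have "{w. liftQ n Q f w \<noteq> 0} \<subseteq> ?S" by (auto simp: liftQ_def split: if_splits)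
  ultimately have "finite {w. liftQ n Q f w \<noteq> 0}" by (rule rev_finite_subset)
  then show ?thesis by (auto simp: ma_carrier liftQ_def)
qed

lemma take_drop_words: "w \<in> words n \<Longrightarrow> take i w \<in> words n \<and> drop i w \<in> words n"
  by (auto simp: words_def dest: in_set_takeD in_set_dropD)

lemma key_mult:
  fixes f g :: "nat list set \<Rightarrow> 'k::field"
  assumes f: "f \<in> carrier (mon_alg (Sn n))" and g: "g \<in> carrier (mon_alg (Sn n))"
    and w: "w \<in> words n" and nq: "cls n w \<notin> Q"
  shows "(f \<otimes>\<^bsub>mon_alg (Sn n)\<^esub> g) (cls n w) = (liftQ n Q f \<otimes>\<^bsub>mon_alg (free_mon n)\<^esub> liftQ n Q g) w"
proof -
  have single: "cls n w = {w}" by (rule notQ_single[OF P w nq])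
  let ?DS = "(\<lambda>i. (cls n (take i w), cls n (drop i w))) ` {..length w}"
  let ?DF = "(\<lambda>i. (take i w, drop i w)) ` {..length w}"
  have tq: "cls n (take i w) \<notin> Q" and dq: "cls n (drop i w) \<notin> Q" for i
  proof -
    show "cls n (take i w) \<notin> Q"
    proof
      assume h: "cls n (take i w) \<in> Q"
      have "cls n ([] @ take i w @ drop i w) \<in> Q"
        using Q_ideal_cls[OF P h, of "[]" "drop i w"] take_drop_words[OF w, of i] by simp
      then show False using nq by simp
    qed
    show "cls n (drop i w) \<notin> Q"
    proof
      assume h: "cls n (drop i w) \<in> Q"
      have "cls n (take i w @ drop i w @ []) \<in> Q"
        using Q_ideal_cls[OF P h, of "take i w" "[]"] take_drop_words[OF w, of i] by simp
      then show False using nq by simp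
    qed
  qed
  have "(f \<otimes>\<^bsub>mon_alg (Sn n)\<^esub> g) (cls n w) = (\<Sum>(x,y)\<in>?DS. f x * g y)"
  proof (rule ma_mult_split[OF f g])
    show "finite ?DS" by simp
    show "?DS \<subseteq> {(x, y). x \<in> carrier (Sn n) \<and> y \<in> carrier (Sn n) \<and> x \<otimes>\<^bsub>Sn n\<^esub> y = cls n w}"
    proof (rule subsetI)
      fix p assume "p \<in> ?DS"
      then obtain i where p: "p = (cls n (take i w), cls n (drop i w))" by blast
      have "take i w \<in> words n" "drop i w \<in> words n" using take_drop_words[OF w] by auto
      then show "p \<in> {(x, y). x \<in> carrier (Sn n) \<and> y \<in> carrier (Sn n) \<and> x \<otimes>\<^bsub>Sn n\<^esub> y = cls n w}"
        unfolding p by (simp add: carrier_Sn mult_Sn)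
    qed
    show "(x, y) \<in> ?DS" if hxy: "x \<in> carrier (Sn n)" "y \<in> carrier (Sn n)" "x \<otimes>\<^bsub>Sn n\<^esub> y = cls n w" for x y
    proof -
      obtain x0 y0 where xy: "x0 \<in> words n" "y0 \<in> words n" "x = cls n x0" "y = cls n y0"
        using hxy by (auto simp: carrier_Sn)
      then have "cls n (x0 @ y0) = {w}" using hxy single by (simp add: mult_Sn)
      then have "x0 @ y0 = w" using cls_self[of "x0 @ y0" n] by blast
      then have "x0 = take (length x0) w" "y0 = drop (length x0) w" "length x0 \<in> {..length w}" by auto
      then show ?thesis using xy by (auto intro!: image_eqI[of _ _ "length x0"])
    qed
  qed
  also have "\<dots> = (\<Sum>i\<in>{..length w}. f (cls n (take i w)) * g (cls n (drop i w)))"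
  proof (subst sum.reindex)
    show "inj_on (\<lambda>i. (cls n (take i w), cls n (drop i w))) {..length w}"
    proof (rule inj_onI)
      fix i j assume "i \<in> {..length w}" "j \<in> {..length w}"
        and "(cls n (take i w), cls n (drop i w)) = (cls n (take j w), cls n (drop j w))"
      then have "(take i w, take j w) \<in> Sn_cong n" "i \<le> length w" "j \<le> length w"
        by (simp_all add: cls_eq_iff)
      then show "i = j" using cong_length[of "take i w" "take j w" n] by simp
    qed
  qed simp
  also have "\<dots> = (\<Sum>i\<in>{..length w}. liftQ n Q f (take i w) * liftQ n Q g (drop i w))"
  proof (rule sum.cong[OF refl])
    fix i
    have "take i w \<in> words n" "drop i w \<in> words n" using take_drop_words[OF w] by auto
    then show "f (cls n (take i w)) * g (cls n (drop i w)) = liftQ n Q f (take i w) * liftQ n Q g (drop i w)"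
      using tq[of i] dq[of i] by (simp add: liftQ_def)
  qed
  also have "\<dots> = (\<Sum>(x,y)\<in>?DF. liftQ n Q f x * liftQ n Q g y)"
  proof (subst sum.reindex)
    show "inj_on (\<lambda>i. (take i w, drop i w)) {..length w}"
    proof (rule inj_onI)
      fix i j assume "i \<in> {..length w}" "j \<in> {..length w}"
        and "(take i w, drop i w) = (take j w, drop j w)"
      then show "i = j" by (metis atMost_iff length_take min.absorb2 prod.inject)
    qed
  qed simp
  also have "\<dots> = (liftQ n Q f \<otimes>\<^bsub>mon_alg (free_mon n)\<^esub> liftQ n Q g) w"
  proof (rule ma_mult_split[OF lift_carrier[OF f] lift_carrier[OF g], symmetric])
    show "finite ?DF" by simp
    show "?DF \<subseteq> {(x, y). x \<in> carrier (free_mon n) \<and> y \<in> carrier (free_mon n) \<and> x \<otimes>\<^bsub>free_mon n\<^esub> y = w}"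
      using take_drop_words[OF w] by auto
    show "(x, y) \<in> ?DF" if "x \<in> carrier (free_mon n)" "y \<in> carrier (free_mon n)" "x \<otimes>\<^bsub>free_mon n\<^esub> y = w" for x y
    proof -
      have "x @ y = w" using that by simp
      then have "x = take (length x) w" "y = drop (length x) w" "length x \<in> {..length w}" by auto
      then show ?thesis by (auto intro!: image_eqI[of _ _ "length x"])
    qed
  qed
  finally show ?thesis .
qed

lemma span_coset_iff:
  fixes a b :: "'m \<Rightarrow> 'k::field"
  assumes M: "monoid M" and I: "ideal (span_in M I) (mon_alg M :: ('m \<Rightarrow> 'k) ring)"
    and a: "a \<in> carrier (mon_alg M)" and b: "b \<in> carrier (mon_alg M)"
  shows "(span_in M I +>\<^bsub>mon_alg M\<^esub> a = span_in M I +>\<^bsub>mon_alg M\<^esub> b) \<longleftrightarrow> (\<forall>x. a x \<noteq> b x \<longrightarrow> x \<in> I)"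
proof -
  interpret R: ring "mon_alg M :: ('m \<Rightarrow> 'k) ring" by (rule ma_ring[OF M])
  have e: "a \<ominus>\<^bsub>mon_alg M\<^esub> b = (\<lambda>z. a z - b z)"
    unfolding a_minus_def ma_neg[OF M b] ma_add by simp
  have c: "a \<ominus>\<^bsub>mon_alg M\<^esub> b \<in> carrier (mon_alg M)" using a b by simp
  have "(span_in M I +>\<^bsub>mon_alg M\<^esub> a = span_in M I +>\<^bsub>mon_alg M\<^esub> b) \<longleftrightarrow> a \<ominus>\<^bsub>mon_alg M\<^esub> b \<in> span_in M I"
    using R.quotient_eq_iff_same_a_r_cos[OF I a b] by simp
  also have "\<dots> \<longleftrightarrow> (\<forall>x. a x \<noteq> b x \<longrightarrow> x \<in> I)"
    using c unfolding span_in_def e by auto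
  finally show ?thesis .
qed

lemma lift_add:
  "liftQ n Q (f \<oplus>\<^bsub>mon_alg (Sn n)\<^esub> g) = liftQ n Q f \<oplus>\<^bsub>mon_alg (free_mon n)\<^esub> (liftQ n Q g :: nat list \<Rightarrow> 'k::field)"
  by (simp add: fun_eq_iff liftQ_def ma_add)

lemma cls_Nil_iff: "cls n w = cls n [] \<longleftrightarrow> w = []"
proof
  assume "cls n w = cls n []"
  then have "(w, []) \<in> Sn_cong n" by (simp add: cls_eq_iff)
  then show "w = []" using cong_length by fastforce
qed simp

lemma lift_one: "liftQ n Q \<one>\<^bsub>mon_alg (Sn n)\<^esub> = (\<one>\<^bsub>mon_alg (free_mon n)\<^esub> :: nat list \<Rightarrow> 'k::field)"
proof
  fix w
  show "liftQ n Q \<one>\<^bsub>mon_alg (Sn n)\<^esub> w = (\<one>\<^bsub>mon_alg (free_mon n)\<^esub> :: nat list \<Rightarrow> 'k) w"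
  proof (cases "w = []")
    case True
    then show ?thesis using one_notin_Q[OF P] by (simp add: liftQ_def ma_one one_Sn)
  next
    case False
    then show ?thesis using cls_Nil_iff[of w] by (simp add: liftQ_def ma_one one_Sn)
  qed
qed

lemma psi_hom:
  "ring_hom_ring (mon_alg (Sn n) :: (nat list set \<Rightarrow> 'k::field) ring)
     (mon_alg (free_mon n) Quot span_in (free_mon n) (Wset n Q))
     (\<lambda>f. span_in (free_mon n) (Wset n Q) +>\<^bsub>mon_alg (free_mon n)\<^esub> liftQ n Q f)"
proof -
  let ?A = "mon_alg (Sn n) :: (nat list set \<Rightarrow> 'k) ring"
  let ?F = "mon_alg (free_mon n) :: (nat list \<Rightarrow> 'k) ring"
  let ?J = "span_in (free_mon n) (Wset n Q) :: (nat list \<Rightarrow> 'k) set"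
  have J: "ideal ?J ?F" by (rule J_ideal)
  have h: "(+>\<^bsub>?F\<^esub>) ?J \<in> ring_hom ?F (?F Quot ?J)" by (rule ideal.rcos_ring_hom[OF J])
  interpret F: ring ?F by (rule ma_ring[OF monoid_free])
  show ?thesis
  proof (rule ring_hom_ringI)
    show "ring ?A" by (rule ma_ring[OF monoid_Sn])
    show "ring (?F Quot ?J)" by (rule ideal.quotient_is_ring[OF J])
    show "?J +>\<^bsub>?F\<^esub> liftQ n Q x \<in> carrier (?F Quot ?J)" if "x \<in> carrier ?A" for x
      using ring_hom_closed[OF h lift_carrier[OF that]] .
    show "?J +>\<^bsub>?F\<^esub> liftQ n Q (x \<oplus>\<^bsub>?A\<^esub> y) =
        (?J +>\<^bsub>?F\<^esub> liftQ n Q x) \<oplus>\<^bsub>?F Quot ?J\<^esub> (?J +>\<^bsub>?F\<^esub> liftQ n Q y)"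
      if "x \<in> carrier ?A" "y \<in> carrier ?A" for x y
      unfolding lift_add using ring_hom_add[OF h lift_carrier[OF that(1)] lift_carrier[OF that(2)]] .
    show "?J +>\<^bsub>?F\<^esub> liftQ n Q \<one>\<^bsub>?A\<^esub> = \<one>\<^bsub>?F Quot ?J\<^esub>"
      unfolding lift_one using ring_hom_one[OF h] .
    show "?J +>\<^bsub>?F\<^esub> liftQ n Q (x \<otimes>\<^bsub>?A\<^esub> y) =
        (?J +>\<^bsub>?F\<^esub> liftQ n Q x) \<otimes>\<^bsub>?F Quot ?J\<^esub> (?J +>\<^bsub>?F\<^esub> liftQ n Q y)"
      if x: "x \<in> carrier ?A" and y: "y \<in> carrier ?A" for x y
    proof -
      have lx: "liftQ n Q x \<in> carrier ?F" and ly: "liftQ n Q y \<in> carrier ?F"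
        using lift_carrier x y by auto
      have xy: "x \<otimes>\<^bsub>?A\<^esub> y \<in> carrier ?A" by (rule ma_mult_closed[OF monoid_Sn x y])
      have p: "liftQ n Q x \<otimes>\<^bsub>?F\<^esub> liftQ n Q y \<in> carrier ?F" using lx ly by simp
      have "?J +>\<^bsub>?F\<^esub> liftQ n Q (x \<otimes>\<^bsub>?A\<^esub> y) = ?J +>\<^bsub>?F\<^esub> (liftQ n Q x \<otimes>\<^bsub>?F\<^esub> liftQ n Q y)"
      proof (subst span_coset_iff[OF monoid_free J lift_carrier[OF xy] p], intro allI impI)
        fix w assume ne: "liftQ n Q (x \<otimes>\<^bsub>?A\<^esub> y) w \<noteq> (liftQ n Q x \<otimes>\<^bsub>?F\<^esub> liftQ n Q y) w"
        show "w \<in> Wset n Q"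
        proof (rule ccontr)
          assume nw: "w \<notin> Wset n Q"
          show False
          proof (cases "w \<in> words n")
            case True
            then have "cls n w \<notin> Q" using nw by (simp add: Wset_def)
            then show False using ne key_mult[OF x y True] True by (simp add: liftQ_def)
          next
            case False
            then have "(liftQ n Q x \<otimes>\<^bsub>?F\<^esub> liftQ n Q y) w = 0" using p by (simp add: ma_carrier)
            then show False using ne False by (simp add: liftQ_def)
          qed
        qed
      qed
      also have "\<dots> = (?J +>\<^bsub>?F\<^esub> liftQ n Q x) \<otimes>\<^bsub>?F Quot ?J\<^esub> (?J +>\<^bsub>?F\<^esub> liftQ n Q y)"
        by (rule ring_hom_mult[OF h lx ly])
      finally show ?thesis .
    qed
  qed
qed

lemma psi_kernel:
  "a_kernel (mon_alg (Sn n) :: (nat list set \<Rightarrow> 'k::field) ring)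
     (mon_alg (free_mon n) Quot span_in (free_mon n) (Wset n Q))
     (\<lambda>f. span_in (free_mon n) (Wset n Q) +>\<^bsub>mon_alg (free_mon n)\<^esub> liftQ n Q f) = span_in (Sn n) Q"
proof -
  let ?A = "mon_alg (Sn n) :: (nat list set \<Rightarrow> 'k) ring"
  let ?F = "mon_alg (free_mon n) :: (nat list \<Rightarrow> 'k) ring"
  let ?J = "span_in (free_mon n) (Wset n Q) :: (nat list \<Rightarrow> 'k) set"
  have J: "ideal ?J ?F" by (rule J_ideal)
  interpret F: ring ?F by (rule ma_ring[OF monoid_free])
  have z: "?J +>\<^bsub>?F\<^esub> \<zero>\<^bsub>?F\<^esub> = ?J"
    by (rule F.a_rcos_zero[OF J]) (simp add: ideal.axioms(1)[OF J] additive_subgroup.zero_closed)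
  have "f \<in> span_in (Sn n) Q \<longleftrightarrow> ?J +>\<^bsub>?F\<^esub> liftQ n Q f = ?J" if f: "f \<in> carrier ?A" for f
  proof -
    have "?J +>\<^bsub>?F\<^esub> liftQ n Q f = ?J \<longleftrightarrow> ?J +>\<^bsub>?F\<^esub> liftQ n Q f = ?J +>\<^bsub>?F\<^esub> \<zero>\<^bsub>?F\<^esub>"
      using z by simp
    also have "\<dots> \<longleftrightarrow> (\<forall>w. liftQ n Q f w \<noteq> 0 \<longrightarrow> w \<in> Wset n Q)"
      using span_coset_iff[OF monoid_free J lift_carrier[OF f], of "\<zero>\<^bsub>?F\<^esub>"] by (simp add: ma_zero ma_carrier)
    also have "\<dots> \<longleftrightarrow> (\<forall>Y. f Y \<noteq> 0 \<longrightarrow> Y \<in> Q)"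
    proof
      assume h: "\<forall>w. liftQ n Q f w \<noteq> 0 \<longrightarrow> w \<in> Wset n Q"
      show "\<forall>Y. f Y \<noteq> 0 \<longrightarrow> Y \<in> Q"
      proof (intro allI impI)
        fix Y assume fX: "f Y \<noteq> 0"
        then have "Y \<in> carrier (Sn n)" using ma_supp_carrier[OF f] by blast
        then obtain w where w: "w \<in> words n" "Y = cls n w" by (auto simp: carrier_Sn)
        show "Y \<in> Q"
        proof (rule ccontr)
          assume "Y \<notin> Q"
          then have "liftQ n Q f w \<noteq> 0" using w fX by (simp add: liftQ_def)
          then have "w \<in> Wset n Q" using h by blast
          then show False using w \<open>Y \<notin> Q\<close> by (simp add: Wset_def)
        qed
      qed
    next
      assume h: "\<forall>Y. f Y \<noteq> 0 \<longrightarrow> Y \<in> Q"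
      show "\<forall>w. liftQ n Q f w \<noteq> 0 \<longrightarrow> w \<in> Wset n Q"
        using h by (auto simp: liftQ_def)
    qed
    also have "\<dots> \<longleftrightarrow> f \<in> span_in (Sn n) Q" using f by (simp add: span_in_def)
    finally show ?thesis by simp
  qed
  moreover have "span_in (Sn n) Q \<subseteq> carrier ?A" by (auto simp: span_in_def)
  ultimately show ?thesis
    unfolding a_kernel_def' by (auto simp: FactRing_def)
qed

lemma psi_surj:
  "(\<lambda>f. span_in (free_mon n) (Wset n Q) +>\<^bsub>mon_alg (free_mon n)\<^esub> liftQ n Q f) `
      carrier (mon_alg (Sn n) :: (nat list set \<Rightarrow> 'k::field) ring)
   = carrier (mon_alg (free_mon n) Quot span_in (free_mon n) (Wset n Q))"
proof -
  let ?A = "mon_alg (Sn n) :: (nat list set \<Rightarrow> 'k) ring"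
  let ?F = "mon_alg (free_mon n) :: (nat list \<Rightarrow> 'k) ring"
  let ?J = "span_in (free_mon n) (Wset n Q) :: (nat list \<Rightarrow> 'k) set"
  have J: "ideal ?J ?F" by (rule J_ideal)
  have h: "(+>\<^bsub>?F\<^esub>) ?J \<in> ring_hom ?F (?F Quot ?J)" by (rule ideal.rcos_ring_hom[OF J])
  show ?thesis
  proof
    show "(\<lambda>f. ?J +>\<^bsub>?F\<^esub> liftQ n Q f) ` carrier ?A \<subseteq> carrier (?F Quot ?J)"
      using ring_hom_closed[OF h lift_carrier] by blast
    show "carrier (?F Quot ?J) \<subseteq> (\<lambda>f. ?J +>\<^bsub>?F\<^esub> liftQ n Q f) ` carrier ?A"
    proof
      fix C assume "C \<in> carrier (?F Quot ?J)"
      then obtain g where g: "g \<in> carrier ?F" "C = ?J +>\<^bsub>?F\<^esub> g"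
        unfolding FactRing_def A_RCOSETS_def' by auto
      define f where "f = (\<lambda>Y. if Y \<in> carrier (Sn n) \<and> Y \<notin> Q then g (the_elem Y) else (0::'k))"
      have fin: "{Y. f Y \<noteq> 0} \<subseteq> cls n ` {w. g w \<noteq> 0}"
      proof
        fix Y assume "Y \<in> {Y. f Y \<noteq> 0}"
        then have Y: "Y \<in> carrier (Sn n)" "Y \<notin> Q" "g (the_elem Y) \<noteq> 0" by (auto simp: f_def split: if_splits)
        then obtain w where w: "w \<in> words n" "Y = cls n w" by (auto simp: carrier_Sn)
        then have "Y = {w}" using notQ_single[OF P] Y by simp
        then show "Y \<in> cls n ` {w. g w \<noteq> 0}" using Y w by auto
      qed
      have fc: "f \<in> carrier ?A"
        using finite_subset[OF fin] g(1) by (auto simp: ma_carrier f_def)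
      have lc: "liftQ n Q f \<in> carrier ?F" by (rule lift_carrier[OF fc])
      have "?J +>\<^bsub>?F\<^esub> liftQ n Q f = ?J +>\<^bsub>?F\<^esub> g"
      proof (subst span_coset_iff[OF monoid_free J lc g(1)], intro allI impI)
        fix w assume ne: "liftQ n Q f w \<noteq> g w"
        show "w \<in> Wset n Q"
        proof (rule ccontr)
          assume nw: "w \<notin> Wset n Q"
          show False
          proof (cases "w \<in> words n")
            case True
            then have nq: "cls n w \<notin> Q" using nw by (simp add: Wset_def)
            then have "cls n w = {w}" using notQ_single[OF P True] by simp
            moreover have "cls n w \<in> carrier (Sn n)" using True by (simp add: carrier_Sn)
            ultimately have "liftQ n Q f w = g w" using True nq by (simp add: liftQ_def f_def)
            then show False using ne by simp
          next
            case False
            then have "g w = 0" using g(1) by (simp add: ma_carrier)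
            then show False using ne False by (simp add: liftQ_def)
          qed
        qed
      qed
      then show "C \<in> (\<lambda>f. ?J +>\<^bsub>?F\<^esub> liftQ n Q f) ` carrier ?A" using g fc by auto
    qed
  qed
qed

lemma max_elem:
  assumes "finite U" "U \<noteq> {}"
  obtains u where "u \<in> U" "\<And>a. a \<in> U \<Longrightarrow> length a \<le> length u"
proof -
  have "Max (length ` U) \<in> length ` U" using assms by simp
  then obtain u where u: "u \<in> U" "length u = Max (length ` U)" by auto
  have "length a \<le> length u" if "a \<in> U" for a using assms that u(2) by simp
  then show ?thesis using that u(1) by blast
qed

lemma J_prime:
  fixes f g :: "nat list \<Rightarrow> 'k::field"
  assumes f: "f \<in> carrier (mon_alg (free_mon n))" and g: "g \<in> carrier (mon_alg (free_mon n))"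
    and all: "\<forall>r\<in>carrier (mon_alg (free_mon n)). f \<otimes>\<^bsub>mon_alg (free_mon n)\<^esub> r \<otimes>\<^bsub>mon_alg (free_mon n)\<^esub> g \<in> span_in (free_mon n) (Wset n Q)"
  shows "f \<in> span_in (free_mon n) (Wset n Q) \<or> g \<in> span_in (free_mon n) (Wset n Q)"
proof (rule ccontr)
  let ?W = "Wset n Q"
  let ?F = "mon_alg (free_mon n) :: (nat list \<Rightarrow> 'k) ring"
  assume "\<not> ?thesis"
  then have nf: "\<exists>w. f w \<noteq> 0 \<and> w \<notin> ?W" and ng: "\<exists>w. g w \<noteq> 0 \<and> w \<notin> ?W"
    using f g by (auto simp: span_in_def)
  let ?U = "{w. f w \<noteq> 0 \<and> w \<notin> ?W}" and ?V = "{w. g w \<noteq> 0 \<and> w \<notin> ?W}"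
  have fU: "finite ?U" "finite ?V" using f g by (auto simp: ma_carrier intro: finite_subset)
  obtain u where u: "u \<in> ?U" "\<And>a. a \<in> ?U \<Longrightarrow> length a \<le> length u"
    using max_elem[OF fU(1)] nf by blast
  obtain v where v: "v \<in> ?V" "\<And>a. a \<in> ?V \<Longrightarrow> length a \<le> length v"
    using max_elem[OF fU(2)] ng by blast
  have uw: "u \<in> words n" using u(1) ma_supp_carrier[OF f] by auto
  have vw: "v \<in> words n" using v(1) ma_supp_carrier[OF g] by auto
  have uq: "cls n u \<notin> Q" using u(1) uw by (simp add: Wset_def)
  have vq: "cls n v \<notin> Q" using v(1) vw by (simp add: Wset_def)
  have "\<not> (\<forall>s\<in>carrier (Sn n). cls n u \<otimes>\<^bsub>Sn n\<^esub> s \<otimes>\<^bsub>Sn n\<^esub> cls n v \<in> Q)"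
    using P uq vq uw vw unfolding mon_prime_def by (auto simp: carrier_Sn)
  then obtain s0 where s0: "s0 \<in> words n" "cls n u \<otimes>\<^bsub>Sn n\<^esub> cls n s0 \<otimes>\<^bsub>Sn n\<^esub> cls n v \<notin> Q"
    by (auto simp: carrier_Sn)
  let ?w0 = "(u @ s0) @ v"
  have w0w: "?w0 \<in> words n" using uw vw s0 by simp
  have "cls n ?w0 \<notin> Q" using s0 uw vw by (simp add: mult_Sn)
  then have w0: "?w0 \<notin> ?W" by (simp add: Wset_def)
  define r :: "nat list \<Rightarrow> 'k" where "r = (\<lambda>x. if x = s0 then 1 else 0)"
  have sr: "{x. r x \<noteq> 0} = {s0}" by (auto simp: r_def)
  have rc: "r \<in> carrier ?F" using s0(1) by (auto simp: ma_carrier r_def)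
  have "(f \<otimes>\<^bsub>?F\<^esub> r \<otimes>\<^bsub>?F\<^esub> g) ?w0 =
    (\<Sum>a\<in>{x. f x \<noteq> 0}. \<Sum>b\<in>{x. r x \<noteq> 0}. \<Sum>c\<in>{x. g x \<noteq> 0}.
       if (a \<otimes>\<^bsub>free_mon n\<^esub> b) \<otimes>\<^bsub>free_mon n\<^esub> c = ?w0 then f a * r b * g c else 0)"
    by (rule ma_triple(1)[OF monoid_free f rc g])
  also have "\<dots> = (\<Sum>a\<in>{x. f x \<noteq> 0}. \<Sum>c\<in>{x. g x \<noteq> 0}.
       if (a @ s0) @ c = ?w0 then f a * g c else 0)"
    unfolding sr by (simp add: r_def cong: if_cong)
  also have "\<dots> = (if (u @ s0) @ v = ?w0 then f u * g v else 0)"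
  proof (rule double_delta)
    show "finite {x. f x \<noteq> 0}" "finite {x. g x \<noteq> 0}" using f g by (auto simp: ma_carrier)
    show "u \<in> {x. f x \<noteq> 0}" "v \<in> {x. g x \<noteq> 0}" using u(1) v(1) by auto
    fix a c assume a: "a \<in> {x. f x \<noteq> 0}" and c: "c \<in> {x. g x \<noteq> 0}"
      and ne: "(if (a @ s0) @ c = ?w0 then f a * g c else 0) \<noteq> 0"
    then have e: "(a @ s0) @ c = ?w0" by (auto split: if_splits)
    have aw: "a \<in> words n" using a ma_supp_carrier[OF f] by auto
    have cw: "c \<in> words n" using c ma_supp_carrier[OF g] by auto
    have "a \<notin> ?W"
    proof
      assume "a \<in> ?W"
      have wi: "\<forall>w\<in>?W. \<forall>u\<in>words n. \<forall>v\<in>words n. u @ w @ v \<in> ?W"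
        using W_word_ideal by (simp add: word_ideal_def)
      have "s0 @ c \<in> words n" using s0(1) cw by simp
      then have "[] @ a @ (s0 @ c) \<in> ?W" using wi \<open>a \<in> ?W\<close> words_Nil by blast
      then show False using e w0 by simp
    qed
    then have la: "length a \<le> length u" using u(2) a by auto
    have "c \<notin> ?W"
    proof
      assume "c \<in> ?W"
      have wi: "\<forall>w\<in>?W. \<forall>u\<in>words n. \<forall>v\<in>words n. u @ w @ v \<in> ?W"
        using W_word_ideal by (simp add: word_ideal_def)
      have "a @ s0 \<in> words n" using s0(1) aw by simp
      then have "(a @ s0) @ c @ [] \<in> ?W" using wi \<open>c \<in> ?W\<close> words_Nil by blast
      then show False using e w0 by simp
    qed
    then have lc: "length c \<le> length v" using v(2) c by auto
    have "length a + length s0 + length c = length u + length s0 + length v"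
      using arg_cong[OF e, of length] by simp
    then have "length a = length u" using la lc by simp
    then have "a = u" using e by (metis append_assoc append_eq_append_conv)
    then show "a = u \<and> c = v" using e by simp
  qed
  also have "\<dots> = f u * g v" by simp
  finally have "(f \<otimes>\<^bsub>?F\<^esub> r \<otimes>\<^bsub>?F\<^esub> g) ?w0 \<noteq> 0" using u(1) v(1) by simp
  then have "f \<otimes>\<^bsub>?F\<^esub> r \<otimes>\<^bsub>?F\<^esub> g \<notin> span_in (free_mon n) ?W" using w0 by (auto simp: span_in_def)
  then show False using all rc by blast
qed

lemma F_quot_prime:
  "prime_ring ((mon_alg (free_mon n) :: (nat list \<Rightarrow> 'k::field) ring) Quot span_in (free_mon n) (Wset n Q))"
proof -
  let ?F = "mon_alg (free_mon n) :: (nat list \<Rightarrow> 'k) ring"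
  let ?J = "span_in (free_mon n) (Wset n Q) :: (nat list \<Rightarrow> 'k) set"
  have J: "ideal ?J ?F" by (rule J_ideal)
  have h: "(+>\<^bsub>?F\<^esub>) ?J \<in> ring_hom ?F (?F Quot ?J)" by (rule ideal.rcos_ring_hom[OF J])
  interpret F: ring ?F by (rule ma_ring[OF monoid_free])
  have zq: "\<zero>\<^bsub>?F Quot ?J\<^esub> = ?J" by (simp add: FactRing_def)
  have mem: "a \<in> ?J" if "a \<in> carrier ?F" "?J +>\<^bsub>?F\<^esub> a = ?J" for a
    by (rule ideal.rcos_const_imp_mem[OF J that])
  have zero: "?J +>\<^bsub>?F\<^esub> a = ?J" if "a \<in> ?J" for a
    by (rule F.a_rcos_zero[OF J that])
  have one_nin: "\<one>\<^bsub>?F\<^esub> \<notin> ?J"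
    using one_notin_Q[OF P] by (auto simp: span_in_def ma_one Wset_def)
  show ?thesis unfolding prime_ring_def
  proof (intro conjI ballI impI)
    show "ring (?F Quot ?J)" by (rule ideal.quotient_is_ring[OF J])
    have "\<one>\<^bsub>?F Quot ?J\<^esub> \<in> carrier (?F Quot ?J)" using ring_hom_closed[OF h F.one_closed] ring_hom_one[OF h] by simp
    moreover have "\<one>\<^bsub>?F Quot ?J\<^esub> \<noteq> \<zero>\<^bsub>?F Quot ?J\<^esub>"
      using ring_hom_one[OF h] zq mem[OF F.one_closed] one_nin by auto
    ultimately show "carrier (?F Quot ?J) \<noteq> {\<zero>\<^bsub>?F Quot ?J\<^esub>}" by blast
  next
    fix a b assume a: "a \<in> carrier (?F Quot ?J)" and b: "b \<in> carrier (?F Quot ?J)"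
      and all: "\<forall>r\<in>carrier (?F Quot ?J). a \<otimes>\<^bsub>?F Quot ?J\<^esub> r \<otimes>\<^bsub>?F Quot ?J\<^esub> b = \<zero>\<^bsub>?F Quot ?J\<^esub>"
    obtain a' where a': "a' \<in> carrier ?F" "a = ?J +>\<^bsub>?F\<^esub> a'"
      using a unfolding FactRing_def A_RCOSETS_def' by auto
    obtain b' where b': "b' \<in> carrier ?F" "b = ?J +>\<^bsub>?F\<^esub> b'"
      using b unfolding FactRing_def A_RCOSETS_def' by auto
    have "a' \<otimes>\<^bsub>?F\<^esub> r \<otimes>\<^bsub>?F\<^esub> b' \<in> ?J" if r: "r \<in> carrier ?F" for r
    proof -
      have "?J +>\<^bsub>?F\<^esub> (a' \<otimes>\<^bsub>?F\<^esub> r \<otimes>\<^bsub>?F\<^esub> b') = a \<otimes>\<^bsub>?F Quot ?J\<^esub> (?J +>\<^bsub>?F\<^esub> r) \<otimes>\<^bsub>?F Quot ?J\<^esub> b"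
        using a' b' r by (simp add: ring_hom_mult[OF h])
      also have "\<dots> = ?J" using all ring_hom_closed[OF h r] zq by simp
      finally show ?thesis using mem a' b' r by simp
    qed
    then have "a' \<in> ?J \<or> b' \<in> ?J" using J_prime[OF a'(1) b'(1)] by blast
    then show "a = \<zero>\<^bsub>?F Quot ?J\<^esub> \<or> b = \<zero>\<^bsub>?F Quot ?J\<^esub>" using zero a' b' zq by auto
  qed
qed

end



lemma smult_carrier: "f \<in> carrier (mon_alg M) \<Longrightarrow> smult_fun k (f :: 'm \<Rightarrow> 'k::field) \<in> carrier (mon_alg M)"
proof -
  assume f: "f \<in> carrier (mon_alg M)"
  have "{x. k * f x \<noteq> 0} \<subseteq> {x. f x \<noteq> 0}" by auto
  then have "finite {x. k * f x \<noteq> 0}" using f by (auto simp: ma_carrier intro: finite_subset)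
  then show ?thesis using f by (auto simp: ma_carrier smult_fun_def)
qed

lemma lift_smult: "liftQ n Q (smult_fun k f) = smult_fun k (liftQ n Q f)"
  by (simp add: fun_eq_iff liftQ_def smult_fun_def)

theorem mainTheorem7:
  fixes n :: nat and Q :: "nat list set set"
  assumes "n \<ge> 3"
    and "mon_prime (Sn n) Q"
  shows "(\<forall>s\<in>carrier (Sn n). Sn_top n \<otimes>\<^bsub>Sn n\<^esub> s \<in> Q)
    \<and> nc_prime_ideal (span_in (Sn n) Q :: (nat list set \<Rightarrow> 'k::field) set) (mon_alg (Sn n))
    \<and> (\<exists>m W (\<phi> :: (nat list set \<Rightarrow> 'k) set \<Rightarrow> (nat list \<Rightarrow> 'k) set).
          word_ideal m W
        \<and> prime_ring (mon_alg (free_mon m) Quot span_in (free_mon m) W)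
        \<and> quot_alg_iso (mon_alg (Sn n)) (span_in (Sn n) Q)
                       (mon_alg (free_mon m)) (span_in (free_mon m) W) \<phi>)"
proof -
  have P: "mon_prime (Sn n) Q" by (rule assms(2))
  let ?A = "mon_alg (Sn n) :: (nat list set \<Rightarrow> 'k) ring"
  let ?F = "mon_alg (free_mon n) :: (nat list \<Rightarrow> 'k) ring"
  let ?J = "span_in (free_mon n) (Wset n Q) :: (nat list \<Rightarrow> 'k) set"
  let ?I = "span_in (Sn n) Q :: (nat list set \<Rightarrow> 'k) set"
  let ?B = "?F Quot ?J"
  let ?psi = "\<lambda>f. ?J +>\<^bsub>?F\<^esub> liftQ n Q f"
  interpret hom: ring_hom_ring ?A ?B ?psi by (rule psi_hom[OF P])
  have ker: "a_kernel ?A ?B ?psi = ?I" by (rule psi_kernel[OF P])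
  have surj: "?psi ` carrier ?A = carrier ?B" by (rule psi_surj[OF P])
  have iso: "(\<lambda>Z. the_elem (?psi ` Z)) \<in> ring_iso (?A Quot ?I) ?B"
    using hom.FactRing_iso_set[OF surj] unfolding ker .
  have Bprime: "prime_ring ?B" by (rule F_quot_prime[OF P])
  have J: "ideal ?J ?F" by (rule J_ideal[OF P])
  have part1: "\<forall>s\<in>carrier (Sn n). Sn_top n \<otimes>\<^bsub>Sn n\<^esub> s \<in> Q"
  proof
    fix s assume s: "s \<in> carrier (Sn n)"
    have tq: "Sn_top n \<in> Q" using top_in_Q[OF P] by (simp add: Sn_top_def)
    have I: "mon_ideal (Sn n) Q" using P by (simp add: mon_prime_def)
    then have "\<forall>q\<in>Q. \<forall>s\<in>carrier (Sn n). q \<otimes>\<^bsub>Sn n\<^esub> s \<in> Q \<and> s \<otimes>\<^bsub>Sn n\<^esub> q \<in> Q"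
      by (simp add: mon_ideal_def)
    then show "Sn_top n \<otimes>\<^bsub>Sn n\<^esub> s \<in> Q" using tq s by blast
  qed
  have part2: "nc_prime_ideal ?I ?A"
    unfolding nc_prime_ideal_def
  proof (intro conjI ballI impI)
    show "ideal ?I ?A" using hom.kernel_is_ideal unfolding ker .
    have "\<one>\<^bsub>?A\<^esub> \<notin> ?I" using one_notin_Q[OF P] by (auto simp: span_in_def ma_one one_Sn)
    then show "?I \<noteq> carrier ?A" using hom.R.one_closed by blast
  next
    fix a b assume a: "a \<in> carrier ?A" and b: "b \<in> carrier ?A"
      and all: "\<forall>r\<in>carrier ?A. a \<otimes>\<^bsub>?A\<^esub> r \<otimes>\<^bsub>?A\<^esub> b \<in> ?I"
    have "?psi a \<otimes>\<^bsub>?B\<^esub> r' \<otimes>\<^bsub>?B\<^esub> ?psi b = \<zero>\<^bsub>?B\<^esub>" if r': "r' \<in> carrier ?B" for r'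
    proof -
      obtain r where r: "r \<in> carrier ?A" "r' = ?psi r" using r' surj by blast
      have "a \<otimes>\<^bsub>?A\<^esub> r \<otimes>\<^bsub>?A\<^esub> b \<in> a_kernel ?A ?B ?psi" using all r(1) ker by simp
      then have z: "?psi (a \<otimes>\<^bsub>?A\<^esub> r \<otimes>\<^bsub>?A\<^esub> b) = \<zero>\<^bsub>?B\<^esub>" unfolding a_kernel_def' by blast
      have ar: "a \<otimes>\<^bsub>?A\<^esub> r \<in> carrier ?A" using a r(1) by (rule hom.R.m_closed)
      have "?psi (a \<otimes>\<^bsub>?A\<^esub> r \<otimes>\<^bsub>?A\<^esub> b) = ?psi (a \<otimes>\<^bsub>?A\<^esub> r) \<otimes>\<^bsub>?B\<^esub> ?psi b"
        by (rule hom.hom_mult[OF ar b])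
      also have "\<dots> = ?psi a \<otimes>\<^bsub>?B\<^esub> ?psi r \<otimes>\<^bsub>?B\<^esub> ?psi b"
        by (subst hom.hom_mult[OF a r(1)]) (rule refl)
      finally show ?thesis using z r(2) by simp
    qed
    moreover have "?psi a \<in> carrier ?B" "?psi b \<in> carrier ?B" using a b by auto
    moreover have pr: "\<forall>a\<in>carrier ?B. \<forall>b\<in>carrier ?B. (\<forall>r\<in>carrier ?B. a \<otimes>\<^bsub>?B\<^esub> r \<otimes>\<^bsub>?B\<^esub> b = \<zero>\<^bsub>?B\<^esub>) \<longrightarrow> a = \<zero>\<^bsub>?B\<^esub> \<or> b = \<zero>\<^bsub>?B\<^esub>"
      using Bprime unfolding prime_ring_def by (elim conjE)
    ultimately have "?psi a = \<zero>\<^bsub>?B\<^esub> \<or> ?psi b = \<zero>\<^bsub>?B\<^esub>"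
      by (meson pr)
    then have "a \<in> a_kernel ?A ?B ?psi \<or> b \<in> a_kernel ?A ?B ?psi"
      using a b unfolding a_kernel_def' by blast
    then show "a \<in> ?I \<or> b \<in> ?I" unfolding ker .
  qed
  have part3: "quot_alg_iso ?A ?I ?F ?J (\<lambda>Z. the_elem (?psi ` Z))"
    unfolding quot_alg_iso_def
  proof (intro conjI allI impI)
    show "(\<lambda>Z. the_elem (?psi ` Z)) \<in> ring_iso (?A Quot ?I) (?F Quot ?J)" by (rule iso)
  next
    fix k x y assume x: "x \<in> carrier ?A" and y: "y \<in> carrier ?F"
      and e: "the_elem (?psi ` (?I +>\<^bsub>?A\<^esub> x)) = ?J +>\<^bsub>?F\<^esub> y"
    have te: "the_elem (?psi ` (?I +>\<^bsub>?A\<^esub> z)) = ?psi z" if "z \<in> carrier ?A" for z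
      using hom.the_elem_simp[OF that] unfolding ker .
    have lx: "liftQ n Q x \<in> carrier ?F" by (rule lift_carrier[OF P x])
    have "?J +>\<^bsub>?F\<^esub> liftQ n Q x = ?J +>\<^bsub>?F\<^esub> y" using e te[OF x] by simp
    then have d: "\<forall>w. liftQ n Q x w \<noteq> y w \<longrightarrow> w \<in> Wset n Q"
      using span_coset_iff[OF P monoid_free J lx y] by simp
    have kx: "smult_fun k x \<in> carrier ?A" by (rule smult_carrier[OF x])
    have "?J +>\<^bsub>?F\<^esub> smult_fun k (liftQ n Q x) = ?J +>\<^bsub>?F\<^esub> smult_fun k y"
      using d by (subst span_coset_iff[OF P monoid_free J smult_carrier[OF lx] smult_carrier[OF y]])
        (auto simp: smult_fun_def)
    then show "the_elem (?psi ` (?I +>\<^bsub>?A\<^esub> smult_fun k x)) = ?J +>\<^bsub>?F\<^esub> smult_fun k y"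
      using te[OF kx] by (simp add: lift_smult)
  qed
  have part4: "\<exists>m W (\<phi> :: (nat list set \<Rightarrow> 'k) set \<Rightarrow> (nat list \<Rightarrow> 'k) set).
          word_ideal m W
        \<and> prime_ring (mon_alg (free_mon m) Quot span_in (free_mon m) W)
        \<and> quot_alg_iso (mon_alg (Sn n)) (span_in (Sn n) Q)
                       (mon_alg (free_mon m)) (span_in (free_mon m) W) \<phi>"
    by (rule exI[of _ n], rule exI[of _ "Wset n Q"], rule exI[of _ "\<lambda>Z. the_elem (?psi ` Z)"])
       (intro conjI W_word_ideal[OF P] F_quot_prime[OF P] part3)
  show ?thesis by (intro conjI part1 part2 part4)
qed


end
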